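(* Let $K\subset\mathbb{R}^n$ be a closed convex set and $\sigma>0$. Then the worst case risk of the LSE satisfies $$\varepsilon_K\lesssim\sqrt{\sigma}\,C_n\,\sqrt{\varepsilon^*}\,n^{1/4},$$ where $C_n=4C(1+\log_{c^*}\sqrt{2\pi n})^{3/2}$ for sufficiently large absolute constants $C>1$ and $c^*$.
   Context: Gaussian sequence model: $Y=\mu+\xi$, $\mu\in K$, $\xi\sim N(0,\sigma^2\mathbb{I}_n)$; LSE $\hat\mu=\operatorname{argmin}_{\nu\in K}\|Y-\nu\|_2^2$; $\varepsilon_K^2=\sup_{\mu\in K}\mathbb{E}_\mu\|\hat\mu-\mu\|_2^2$. $M(\eta,T)$: maximal cardinality of a subset of $T$ with pairwise distances $>\eta$; local entropy $M^{\mathrm{loc}}(\varepsilon)=\sup_{\theta\in K}M(\varepsilon/c^*,B(\theta,\varepsilon)\cap K)$ ($c^*$ the same large absolute constant). $\varepsilon^*=\sup\{\varepsilon:\varepsilon^2/\sigma^2\le\log M^{\mathrm{loc}}(\varepsilon)\}$, whose square is (up to constants) the minimax risk over $K$. $\lesssim$ hides an absolute constant. *)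

theory Defs
  imports "HOL-Analysis.Analysis" "HOL-Probability.Probability"
begin

text \<open>R^n is represented by functions nat => real vanishing outside {..<n}.\<close>

definition Rn :: "nat \<Rightarrow> (nat \<Rightarrow> real) set" where
  "Rn n = {x. \<forall>i\<ge>n. x i = 0}"

definition enorm :: "nat \<Rightarrow> (nat \<Rightarrow> real) \<Rightarrow> real" where
  "enorm n x = sqrt (\<Sum>i<n. (x i)\<^sup>2)"

definition edist :: "nat \<Rightarrow> (nat \<Rightarrow> real) \<Rightarrow> (nat \<Rightarrow> real) \<Rightarrow> real" where
  "edist n x y = enorm n (\<lambda>i. x i - y i)"

definition closed_n :: "nat \<Rightarrow> (nat \<Rightarrow> real) set \<Rightarrow> bool" where
  "closed_n n K \<longleftrightarrow> (\<forall>x y. (\<forall>k. x k \<in> K) \<and> y \<in> Rn n \<and>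
      (\<lambda>k. edist n (x k) y) \<longlonglongrightarrow> 0 \<longrightarrow> y \<in> K)"

definition convex_n :: "(nat \<Rightarrow> real) set \<Rightarrow> bool" where
  "convex_n K \<longleftrightarrow> (\<forall>x\<in>K. \<forall>y\<in>K. \<forall>t::real. 0 \<le> t \<and> t \<le> 1 \<longrightarrow>
      (\<lambda>i. (1 - t) * x i + t * y i) \<in> K)"

definition eball :: "nat \<Rightarrow> (nat \<Rightarrow> real) \<Rightarrow> real \<Rightarrow> (nat \<Rightarrow> real) set" where
  "eball n \<theta> r = {x \<in> Rn n. edist n x \<theta> \<le> r}"

definition lse :: "nat \<Rightarrow> (nat \<Rightarrow> real) set \<Rightarrow> (nat \<Rightarrow> real) \<Rightarrow> (nat \<Rightarrow> real)" where
  "lse n K Y = (SOME \<nu>. \<nu> \<in> K \<and> (\<forall>w\<in>K. (edist n Y \<nu>)\<^sup>2 \<le> (edist n Y w)\<^sup>2))"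

definition gauss :: "nat \<Rightarrow> real \<Rightarrow> (nat \<Rightarrow> real) measure" where
  "gauss n \<sigma> = (\<Pi>\<^sub>M i\<in>{..<n}. density lborel (normal_density 0 \<sigma>))"

definition shift :: "nat \<Rightarrow> (nat \<Rightarrow> real) \<Rightarrow> (nat \<Rightarrow> real) \<Rightarrow> (nat \<Rightarrow> real)" where
  "shift n \<mu> \<xi> = (\<lambda>i. if i < n then \<mu> i + \<xi> i else 0)"

text \<open>Worst-case risk epsilon_K^2 (as an extended nonnegative real).\<close>
definition worst_risk :: "nat \<Rightarrow> real \<Rightarrow> (nat \<Rightarrow> real) set \<Rightarrow> ennreal" where
  "worst_risk n \<sigma> K = (SUP \<mu>\<in>K. \<integral>\<^sup>+ \<xi>. ennreal ((edist n (lse n K (shift n \<mu> \<xi>)) \<mu>)\<^sup>2) \<partial>gauss n \<sigma>)"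

definition packing :: "nat \<Rightarrow> real \<Rightarrow> (nat \<Rightarrow> real) set \<Rightarrow> enat" where
  "packing n \<eta> T = (SUP S\<in>{S. finite S \<and> S \<subseteq> T \<and>
       (\<forall>x\<in>S. \<forall>y\<in>S. x \<noteq> y \<longrightarrow> edist n x y > \<eta>)}. enat (card S))"

definition local_packing :: "nat \<Rightarrow> real \<Rightarrow> (nat \<Rightarrow> real) set \<Rightarrow> real \<Rightarrow> enat" where
  "local_packing n c K \<epsilon> = (SUP \<theta>\<in>K. packing n (\<epsilon> / c) (eball n \<theta> \<epsilon> \<inter> K))"

definition entropy_cond :: "nat \<Rightarrow> real \<Rightarrow> (nat \<Rightarrow> real) set \<Rightarrow> real \<Rightarrow> real \<Rightarrow> bool" where
  "entropy_cond n c K \<sigma> \<epsilon> = (case local_packing n c K \<epsilon> of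
       enat m \<Rightarrow> \<epsilon>\<^sup>2 / \<sigma>\<^sup>2 \<le> ln (real m) | \<infinity> \<Rightarrow> True)"

definition eps_star :: "nat \<Rightarrow> real \<Rightarrow> (nat \<Rightarrow> real) set \<Rightarrow> real \<Rightarrow> real" where
  "eps_star n c K \<sigma> = Sup {\<epsilon>. 0 \<le> \<epsilon> \<and> entropy_cond n c K \<sigma> \<epsilon>}"

end

theory Submission
  imports Defs
begin


definition ip :: "nat \<Rightarrow> (nat \<Rightarrow> real) \<Rightarrow> (nat \<Rightarrow> real) \<Rightarrow> real" where
  "ip n x y = (\<Sum>i<n. x i * y i)"

lemma enorm_nonneg[simp]: "0 \<le> enorm n x"
  by (simp add: enorm_def sum_nonneg)

lemma enorm_sq: "(enorm n x)\<^sup>2 = (\<Sum>i<n. (x i)\<^sup>2)"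
  by (simp add: enorm_def sum_nonneg)

lemma edist_nonneg[simp]: "0 \<le> edist n x y"
  by (simp add: edist_def)

lemma edist_sq: "(edist n x y)\<^sup>2 = (\<Sum>i<n. (x i - y i)\<^sup>2)"
  by (simp add: edist_def enorm_sq)

lemma enorm_L2: "enorm n x = L2_set x {..<n}"
  by (simp add: enorm_def L2_set_def)

lemma edist_sym: "edist n x y = edist n y x"
  unfolding edist_def enorm_def by (simp add: power2_commute)

lemma edist_self[simp]: "edist n x x = 0"
  unfolding edist_def enorm_def by simp

lemma ip_cs: "ip n x y \<le> enorm n x * enorm n y"
proof -
  have "ip n x y \<le> (\<Sum>i<n. \<bar>x i\<bar> * \<bar>y i\<bar>)"
    unfolding ip_def by (intro sum_mono) (metis abs_ge_self abs_mult)
  also have "\<dots> \<le> enorm n x * enorm n y" unfolding enorm_L2 by (rule L2_set_mult_ineq)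
  finally show ?thesis .
qed

lemma ip_abs_cs: "\<bar>ip n x y\<bar> \<le> enorm n x * enorm n y"
proof -
  have "- ip n x y = ip n (\<lambda>i. - x i) y" by (simp add: ip_def sum_negf)
  moreover have "enorm n (\<lambda>i. - x i) = enorm n x" by (simp add: enorm_def)
  ultimately show ?thesis using ip_cs[of n x y] ip_cs[of n "\<lambda>i. - x i" y] by (simp add: abs_le_iff)
qed

lemma edist_triangle: "edist n x z \<le> edist n x y + edist n y z"
proof -
  have "edist n x z = L2_set (\<lambda>i. (x i - y i) + (y i - z i)) {..<n}"
    by (simp add: edist_def enorm_L2)
  also have "\<dots> \<le> L2_set (\<lambda>i. x i - y i) {..<n} + L2_set (\<lambda>i. y i - z i) {..<n}"
    by (rule L2_set_triangle_ineq)
  finally show ?thesis by (simp add: edist_def enorm_L2)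
qed

lemma coord_le_edist: "i < n \<Longrightarrow> \<bar>x i - y i\<bar> \<le> edist n x y"
proof -
  assume "i < n"
  have "(x i - y i)\<^sup>2 \<le> (\<Sum>j<n. (x j - y j)\<^sup>2)"
    using \<open>i < n\<close> by (intro member_le_sum) auto
  then have "(x i - y i)\<^sup>2 \<le> (edist n x y)\<^sup>2" by (simp add: edist_sq)
  then show ?thesis using abs_le_square_iff by (metis abs_of_nonneg edist_nonneg)
qed



lemma parallelogram:
  "(edist n x y)\<^sup>2 = 2 * (edist n Y x)\<^sup>2 + 2 * (edist n Y y)\<^sup>2
     - 4 * (edist n Y (\<lambda>i. (1 - 1/2) * x i + 1/2 * y i))\<^sup>2"
proof -
  have "\<And>i. (x i - y i)\<^sup>2 = 2 * (Y i - x i)\<^sup>2 + 2 * (Y i - y i)\<^sup>2 - 4 * (Y i - ((1 - 1/2) * x i + 1/2 * y i))\<^sup>2"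
    by (simp add: power2_eq_square algebra_simps)
  then have "(\<Sum>i<n. (x i - y i)\<^sup>2) = (\<Sum>i<n. 2 * (Y i - x i)\<^sup>2 + 2 * (Y i - y i)\<^sup>2 - 4 * (Y i - ((1 - 1/2) * x i + 1/2 * y i))\<^sup>2)"
    by (intro sum.cong) auto
  also have "\<dots> = 2 * (\<Sum>i<n. (Y i - x i)\<^sup>2) + 2 * (\<Sum>i<n. (Y i - y i)\<^sup>2) - 4 * (\<Sum>i<n. (Y i - ((1 - 1/2) * x i + 1/2 * y i))\<^sup>2)"
    by (simp only: sum_subtractf sum.distrib sum_distrib_left)
  finally show ?thesis by (simp only: edist_sq)
qed

lemma proj_exists:
  assumes ne: "K \<noteq> {}" and sub: "K \<subseteq> Rn n" and cl: "closed_n n K" and cv: "convex_n K"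
  shows "\<exists>\<nu>. \<nu> \<in> K \<and> (\<forall>w\<in>K. (edist n Y \<nu>)\<^sup>2 \<le> (edist n Y w)\<^sup>2)"
proof -
  define D where "D = (\<lambda>w. edist n Y w) ` K"
  define d where "d = Inf D"
  have Dne: "D \<noteq> {}" using ne by (simp add: D_def)
  have Dbdd: "bdd_below D" unfolding D_def by (rule bdd_belowI[of _ 0]) auto
  have dle: "d \<le> edist n Y w" if "w \<in> K" for w
    unfolding d_def using that Dbdd by (intro cInf_lower) (auto simp: D_def)
  have d0: "0 \<le> d" unfolding d_def using Dne by (intro cInf_greatest) (auto simp: D_def)
  have "\<forall>k::nat. \<exists>w\<in>K. edist n Y w < d + 1 / (real k + 1)"
  proof
    fix k :: nat
    have "Inf D < d + 1 / (real k + 1)" by (simp add: d_def)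
    then obtain z where "z \<in> D" "z < d + 1 / (real k + 1)" using cInf_lessD[OF Dne] by blast
    then show "\<exists>w\<in>K. edist n Y w < d + 1 / (real k + 1)" by (auto simp: D_def)
  qed
  then obtain f where fK: "\<And>k. f k \<in> K" and fd: "\<And>k. edist n Y (f k) < d + 1 / (real k + 1)"
    by metis
  have fdist: "(edist n (f k) (f l))\<^sup>2 \<le> 2 * (2 * d + 1) * (1 / (real k + 1) + 1 / (real l + 1))" for k l
  proof -
    define m where "m = (\<lambda>i. (1 - 1/2) * f k i + 1/2 * f l i)"
    have h: "0 \<le> (1/2::real) \<and> (1/2::real) \<le> 1" by simp
    have "m \<in> K" unfolding m_def using cv fK h unfolding convex_n_def by blast
    then have dm: "d \<le> edist n Y m" by (rule dle)
    define a where "a = 1 / (real k + 1)"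
    define b where "b = 1 / (real l + 1)"
    have a0: "0 \<le> a" "a \<le> 1" and b0: "0 \<le> b" "b \<le> 1" by (auto simp: a_def b_def)
    have ek: "(edist n Y (f k))\<^sup>2 \<le> (d + a)\<^sup>2"
      using fd[of k] by (intro power_mono) (auto simp: a_def)
    have el: "(edist n Y (f l))\<^sup>2 \<le> (d + b)\<^sup>2"
      using fd[of l] by (intro power_mono) (auto simp: b_def)
    have em: "d\<^sup>2 \<le> (edist n Y m)\<^sup>2" using dm d0 by (intro power_mono) auto
    have "(edist n (f k) (f l))\<^sup>2 \<le> 2 * (d + a)\<^sup>2 + 2 * (d + b)\<^sup>2 - 4 * d\<^sup>2"
      using parallelogram[of n "f k" "f l" Y] ek el em unfolding m_def by linarith
    also have "\<dots> = 2 * (2 * d * a + a * a) + 2 * (2 * d * b + b * b)"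
      by (simp add: power2_eq_square algebra_simps)
    also have "\<dots> \<le> 2 * (2 * d * a + a) + 2 * (2 * d * b + b)"
      using a0 b0 d0 by (intro add_mono mult_left_mono) (auto simp: mult_le_cancel_left1 mult_left_le)
    also have "\<dots> = 2 * (2 * d + 1) * (a + b)" by (simp add: algebra_simps)
    finally show ?thesis by (simp add: a_def b_def)
  qed
  have cauchy: "Cauchy (\<lambda>k. f k i)" if "i < n" for i
  proof (rule metric_CauchyI)
    fix e :: real assume "0 < e"
    define Q where "Q = 2 * (2 * d + 1)"
    have Q0: "0 < Q" using d0 by (simp add: Q_def)
    obtain M :: nat where M: "real M > 2 * Q / e\<^sup>2" using reals_Archimedean2 by blast
    show "\<exists>M. \<forall>k\<ge>M. \<forall>l\<ge>M. dist (f k i) (f l i) < e"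
    proof (intro exI allI impI)
      fix k l assume "M \<le> k" "M \<le> l"
      have Mpos: "real M > 0" using M Q0 \<open>0 < e\<close> by (smt (verit) divide_pos_pos zero_less_power)
      have "1 / (real k + 1) < 1 / real M" using \<open>M \<le> k\<close> Mpos by (intro divide_strict_left_mono) auto
      moreover have "1 / (real l + 1) < 1 / real M" using \<open>M \<le> l\<close> Mpos by (intro divide_strict_left_mono) auto
      ultimately have "Q * (1 / (real k + 1) + 1 / (real l + 1)) < Q * (2 / real M)"
        using Q0 by (intro mult_strict_left_mono) auto
      also have "\<dots> < e\<^sup>2" using M Mpos \<open>0 < e\<close> Q0 by (simp add: field_simps)
      finally have "(edist n (f k) (f l))\<^sup>2 < e\<^sup>2" using fdist[of k l] unfolding Q_def by linarith
      then have "edist n (f k) (f l) < e" using \<open>0 < e\<close> by (simp add: power_less_imp_less_base)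
      then show "dist (f k i) (f l i) < e" using coord_le_edist[OF that, of "f k" "f l"]
        by (simp add: dist_real_def)
    qed
  qed
  define y where "y = (\<lambda>i. lim (\<lambda>k. f k i))"
  have ylim: "(\<lambda>k. f k i) \<longlonglongrightarrow> y i" if "i < n" for i
    using cauchy[OF that] unfolding y_def by (simp add: Cauchy_convergent_iff convergent_LIMSEQ_iff)
  have fzero: "f k i = 0" if "n \<le> i" for k i using fK[of k] sub that by (auto simp: Rn_def)
  have yRn: "y \<in> Rn n" unfolding Rn_def y_def using fzero by (simp add: limI)
  have edlim: "(\<lambda>k. edist n (f k) y) \<longlonglongrightarrow> 0"
  proof -
    have "(\<lambda>k. sqrt (\<Sum>i<n. (f k i - y i)\<^sup>2)) \<longlonglongrightarrow> sqrt (\<Sum>i<n. (y i - y i)\<^sup>2)"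
      by (intro tendsto_intros ylim) auto
    then show ?thesis by (simp add: edist_def enorm_def)
  qed
  have yK: "y \<in> K" using cl fK yRn edlim unfolding closed_n_def by blast
  have "edist n Y y \<le> d"
  proof (rule LIMSEQ_le_const)
    show "(\<lambda>k. d + 1 / (real k + 1) + edist n (f k) y) \<longlonglongrightarrow> d"
    proof -
      have h: "(\<lambda>k. 1/(real k + 1)) \<longlonglongrightarrow> 0" using LIMSEQ_inverse_real_of_nat
        by (simp add: inverse_eq_divide add.commute)
      show ?thesis using tendsto_add[OF tendsto_add[OF tendsto_const[of d] h] edlim] by simp
    qed
    show "\<exists>N. \<forall>k\<ge>N. edist n Y y \<le> d + 1 / (real k + 1) + edist n (f k) y"
    proof (intro exI allI impI)
      fix k :: nat
      have "edist n Y y \<le> edist n Y (f k) + edist n (f k) y" by (rule edist_triangle)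
      then show "edist n Y y \<le> d + 1 / (real k + 1) + edist n (f k) y" using fd[of k] by linarith
    qed
  qed
  then have "\<forall>w\<in>K. (edist n Y y)\<^sup>2 \<le> (edist n Y w)\<^sup>2"
  proof (intro ballI)
    fix w assume "edist n Y y \<le> d" "w \<in> K"
    then have "edist n Y y \<le> edist n Y w" using dle[of w] by linarith
    then show "(edist n Y y)\<^sup>2 \<le> (edist n Y w)\<^sup>2" by (intro power_mono) auto
  qed
  then show ?thesis using yK by blast
qed

lemma lse_prop:
  assumes "K \<noteq> {}" "K \<subseteq> Rn n" "closed_n n K" "convex_n K"
  shows "lse n K Y \<in> K \<and> (\<forall>w\<in>K. (edist n Y (lse n K Y))\<^sup>2 \<le> (edist n Y w)\<^sup>2)"
  unfolding lse_def by (rule someI_ex[OF proj_exists[OF assms]])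

lemma var_ineq:
  assumes cv: "convex_n K" and nK: "\<nu> \<in> K" and wK: "w \<in> K"
    and mn: "\<forall>w\<in>K. (edist n Y \<nu>)\<^sup>2 \<le> (edist n Y w)\<^sup>2"
  shows "ip n (\<lambda>i. Y i - \<nu> i) (\<lambda>i. w i - \<nu> i) \<le> 0"
proof (rule ccontr)
  define a where "a = ip n (\<lambda>i. Y i - \<nu> i) (\<lambda>i. w i - \<nu> i)"
  define b where "b = (\<Sum>i<n. (w i - \<nu> i)\<^sup>2)"
  assume "\<not> ip n (\<lambda>i. Y i - \<nu> i) (\<lambda>i. w i - \<nu> i) \<le> 0"
  then have a0: "a > 0" by (simp add: a_def)
  have b0: "b \<ge> 0" by (simp add: b_def sum_nonneg)
  have key: "0 \<le> - 2 * t * a + t\<^sup>2 * b" if "0 \<le> t" "t \<le> 1" for t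
  proof -
    have "(\<lambda>i. (1 - t) * \<nu> i + t * w i) \<in> K" using cv nK wK that unfolding convex_n_def by blast
    then have le: "(edist n Y \<nu>)\<^sup>2 \<le> (edist n Y (\<lambda>i. (1 - t) * \<nu> i + t * w i))\<^sup>2" using mn by blast
    have "\<And>i. (Y i - ((1 - t) * \<nu> i + t * w i))\<^sup>2 = (Y i - \<nu> i)\<^sup>2 + (- 2 * t) * ((Y i - \<nu> i) * (w i - \<nu> i)) + t\<^sup>2 * (w i - \<nu> i)\<^sup>2"
      by (simp add: power2_eq_square algebra_simps)
    then have "(edist n Y (\<lambda>i. (1 - t) * \<nu> i + t * w i))\<^sup>2
        = (\<Sum>i<n. (Y i - \<nu> i)\<^sup>2 + (- 2 * t) * ((Y i - \<nu> i) * (w i - \<nu> i)) + t\<^sup>2 * (w i - \<nu> i)\<^sup>2)"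
      by (simp only: edist_sq)
    also have "\<dots> = (edist n Y \<nu>)\<^sup>2 + (- 2 * t) * a + t\<^sup>2 * b"
      by (simp only: sum.distrib sum_distrib_left[symmetric] edist_sq a_def b_def ip_def)
    finally show ?thesis using le by linarith
  qed
  show False
  proof (cases "b = 0")
    case True
    then show False using key[of 1] a0 by simp
  next
    case False
    then have bp: "b > 0" using b0 by simp
    define t where "t = min 1 (a / b)"
    have t0: "0 < t" "t \<le> 1" using a0 bp by (auto simp: t_def)
    have "t * b \<le> a" using bp by (simp add: t_def min_def field_simps)
    then have "t\<^sup>2 * b \<le> t * a" using t0 by (simp add: power2_eq_square mult.assoc mult_left_mono)
    moreover have "0 < t * a" using t0 a0 by simp
    ultimately have "- 2 * t * a + t\<^sup>2 * b < 0" by linarith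
    then show False using key[of t] t0 by simp
  qed
qed

lemma lse_basic:
  assumes ne: "K \<noteq> {}" and sub: "K \<subseteq> Rn n" and cl: "closed_n n K" and cv: "convex_n K" and mK: "\<mu> \<in> K"
  shows "lse n K (shift n \<mu> \<xi>) \<in> K \<and>
    (edist n (lse n K (shift n \<mu> \<xi>)) \<mu>)\<^sup>2 \<le> ip n \<xi> (\<lambda>i. lse n K (shift n \<mu> \<xi>) i - \<mu> i)"
proof -
  define \<nu> where "\<nu> = lse n K (shift n \<mu> \<xi>)"
  have P: "\<nu> \<in> K \<and> (\<forall>w\<in>K. (edist n (shift n \<mu> \<xi>) \<nu>)\<^sup>2 \<le> (edist n (shift n \<mu> \<xi>) w)\<^sup>2)"
    unfolding \<nu>_def by (rule lse_prop[OF ne sub cl cv])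
  have "ip n (\<lambda>i. shift n \<mu> \<xi> i - \<nu> i) (\<lambda>i. \<mu> i - \<nu> i) \<le> 0"
    using P mK by (intro var_ineq[OF cv]) auto
  then have "(\<Sum>i<n. (\<mu> i + \<xi> i - \<nu> i) * (\<mu> i - \<nu> i)) \<le> 0"
    by (simp add: ip_def shift_def)
  moreover have "(\<Sum>i<n. (\<mu> i + \<xi> i - \<nu> i) * (\<mu> i - \<nu> i)) = (\<Sum>i<n. (\<nu> i - \<mu> i)\<^sup>2) - (\<Sum>i<n. \<xi> i * (\<nu> i - \<mu> i))"
    by (simp add: sum_subtractf[symmetric] power2_eq_square algebra_simps)
  ultimately have "(\<Sum>i<n. (\<nu> i - \<mu> i)\<^sup>2) \<le> ip n \<xi> (\<lambda>i. \<nu> i - \<mu> i)"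
    by (simp add: ip_def)
  then show ?thesis using P by (simp add: edist_sq \<nu>_def)
qed



definition gridB :: "nat \<Rightarrow> real \<Rightarrow> nat" where
  "gridB n c = nat (2 * (\<lceil>c * sqrt (real n)\<rceil> + 1) + 1) ^ n"

lemma grid_card:
  assumes n1: "n \<ge> 1" and c0: "c > 0" and e0: "\<epsilon> > 0" and fin: "finite S"
    and Ssub: "S \<subseteq> eball n \<theta> \<epsilon>"
    and sep: "\<forall>x\<in>S. \<forall>y\<in>S. x \<noteq> y \<longrightarrow> edist n x y > \<epsilon> / c"
  shows "card S \<le> gridB n c"
proof -
  define h where "h = (\<epsilon> / c) / sqrt (real n)"
  have h0: "h > 0" using n1 c0 e0 by (simp add: h_def)
  define N :: int where "N = \<lceil>c * sqrt (real n)\<rceil> + 1"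
  define g where "g = (\<lambda>x. restrict (\<lambda>i. \<lfloor>(x i - \<theta> i) / h\<rfloor>) {..<n})"
  have inj: "inj_on g S"
  proof (rule inj_onI, rule ccontr)
    fix x y assume xS: "x \<in> S" and yS: "y \<in> S" and gxy: "g x = g y" and ne: "x \<noteq> y"
    have "\<bar>x i - y i\<bar> \<le> h" if "i < n" for i
    proof -
      have "\<lfloor>(x i - \<theta> i) / h\<rfloor> = \<lfloor>(y i - \<theta> i) / h\<rfloor>"
        using fun_cong[OF gxy, of i] that by (simp add: g_def)
      then have "\<bar>(x i - \<theta> i) / h - (y i - \<theta> i) / h\<bar> < 1"
        using floor_correct[of "(x i - \<theta> i) / h"] floor_correct[of "(y i - \<theta> i) / h"]
        by (simp add: abs_less_iff) linarith
      then have "\<bar>(x i - y i) / h\<bar> < 1" by (simp add: diff_divide_distrib)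
      then have "\<bar>x i - y i\<bar> / h < 1" using h0 by (simp only: abs_divide abs_of_pos)
      then show ?thesis using h0 by (simp only: divide_less_eq_1_pos)
    qed
    then have "(\<Sum>i<n. (x i - y i)\<^sup>2) \<le> (\<Sum>i<n. h\<^sup>2)"
    proof (intro sum_mono)
      fix i assume "i \<in> {..<n}" and hh: "\<And>i. i < n \<Longrightarrow> \<bar>x i - y i\<bar> \<le> h"
      then have "\<bar>x i - y i\<bar>\<^sup>2 \<le> h\<^sup>2" by (intro power_mono) auto
      then show "(x i - y i)\<^sup>2 \<le> h\<^sup>2" by (simp only: power2_abs)
    qed
    also have "\<dots> = (\<epsilon> / c)\<^sup>2" using n1 c0 by (simp add: h_def power_divide power_mult_distrib)
    finally have "(edist n x y)\<^sup>2 \<le> (\<epsilon> / c)\<^sup>2" by (simp only: edist_sq)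
    moreover have "0 \<le> \<epsilon> / c" using c0 e0 by simp
    ultimately have "edist n x y \<le> \<epsilon> / c" by (rule power2_le_imp_le)
    moreover have "edist n x y > \<epsilon> / c" using sep xS yS ne by auto
    ultimately show False by linarith
  qed
  have img: "g ` S \<subseteq> (\<Pi>\<^sub>E i\<in>{..<n}. {-N..N})"
  proof
    fix z assume "z \<in> g ` S"
    then obtain x where xS: "x \<in> S" and z: "z = g x" by blast
    have "x \<in> eball n \<theta> \<epsilon>" using xS Ssub by blast
    then have ed: "edist n x \<theta> \<le> \<epsilon>" by (simp add: eball_def)
    have "\<lfloor>(x i - \<theta> i) / h\<rfloor> \<in> {-N..N}" if "i < n" for i
    proof -
      have "\<bar>x i - \<theta> i\<bar> \<le> \<epsilon>" using coord_le_edist[OF that, of x \<theta>] ed by linarith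
      then have "\<bar>x i - \<theta> i\<bar> / h \<le> \<epsilon> / h" using h0 by (intro divide_right_mono) auto
      then have "\<bar>(x i - \<theta> i) / h\<bar> \<le> \<epsilon> / h" using h0 by (simp only: abs_divide abs_of_pos)
      also have "\<epsilon> / h = c * sqrt (real n)" using e0 c0 n1 by (simp add: h_def field_simps)
      finally have a: "\<bar>(x i - \<theta> i) / h\<bar> \<le> c * sqrt (real n)" .
      have "c * sqrt (real n) \<le> \<lceil>c * sqrt (real n)\<rceil>" by (rule le_of_int_ceiling)
      moreover have "real_of_int N = real_of_int \<lceil>c * sqrt (real n)\<rceil> + 1" by (simp add: N_def)
      ultimately have "\<bar>(x i - \<theta> i) / h\<bar> \<le> of_int N - 1" using a by linarith
      then have u1: "(x i - \<theta> i) / h \<le> of_int N - 1" and u2: "- (of_int N - 1) \<le> (x i - \<theta> i) / h"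
        using abs_le_iff[of "(x i - \<theta> i) / h" "of_int N - 1"] by linarith+
      have f1: "real_of_int \<lfloor>(x i - \<theta> i) / h\<rfloor> \<le> of_int N"
        using floor_correct[of "(x i - \<theta> i) / h"] u1 by linarith
      have f2: "real_of_int (- N) \<le> real_of_int \<lfloor>(x i - \<theta> i) / h\<rfloor>"
        using floor_correct[of "(x i - \<theta> i) / h"] u2 by (simp only: of_int_minus of_int_add of_int_1) linarith
      show ?thesis using f1 f2 by (simp only: atLeastAtMost_iff of_int_le_iff)
    qed
    then show "z \<in> (\<Pi>\<^sub>E i\<in>{..<n}. {-N..N})" using z by (auto simp: g_def)
  qed
  have "card S = card (g ` S)" using inj by (simp add: card_image)
  also have "\<dots> \<le> card (\<Pi>\<^sub>E i\<in>{..<n}. {-N..N})" by (rule card_mono[OF _ img]) (simp add: finite_PiE)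
  also have "\<dots> = nat (2 * N + 1) ^ n" by (simp add: card_PiE)
  finally show ?thesis by (simp add: gridB_def N_def)
qed



definition sep_n :: "nat \<Rightarrow> real \<Rightarrow> (nat \<Rightarrow> real) set \<Rightarrow> bool" where
  "sep_n n \<eta> S \<longleftrightarrow> (\<forall>x\<in>S. \<forall>y\<in>S. x \<noteq> y \<longrightarrow> edist n x y > \<eta>)"

lemma packing_upper:
  assumes "finite S" "S \<subseteq> T" "sep_n n \<eta> S"
  shows "enat (card S) \<le> packing n \<eta> T"
  unfolding packing_def using assms unfolding sep_n_def by (intro SUP_upper) auto

lemma packing_le_local:
  assumes "\<theta> \<in> K"
  shows "packing n (\<epsilon> / c) (eball n \<theta> \<epsilon> \<inter> K) \<le> local_packing n c K \<epsilon>"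
  unfolding local_packing_def using assms by (intro SUP_upper) auto

lemma local_packing_le:
  assumes n1: "n \<ge> 1" and c0: "c > 0" and e0: "\<epsilon> > 0"
  shows "local_packing n c K \<epsilon> \<le> enat (gridB n c)"
  unfolding local_packing_def packing_def
proof (intro SUP_least)
  fix \<theta> S assume "S \<in> {S. finite S \<and> S \<subseteq> eball n \<theta> \<epsilon> \<inter> K \<and>
       (\<forall>x\<in>S. \<forall>y\<in>S. x \<noteq> y \<longrightarrow> \<epsilon> / c < edist n x y)}"
  then have "card S \<le> gridB n c" using grid_card[OF n1 c0 e0, of S \<theta>] by auto
  then show "enat (card S) \<le> enat (gridB n c)" by simp
qed

lemma ln_nat_nonneg: "0 \<le> ln (real (m::nat))"
  by (cases "m = 0") auto

definition Sset :: "nat \<Rightarrow> real \<Rightarrow> (nat \<Rightarrow> real) set \<Rightarrow> real \<Rightarrow> real set" where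
  "Sset n c K \<sigma> = {\<epsilon>. 0 \<le> \<epsilon> \<and> entropy_cond n c K \<sigma> \<epsilon>}"

lemma S_bdd:
  assumes n1: "n \<ge> 1" and c0: "c > 0" and s0: "\<sigma> > 0"
  shows "bdd_above (Sset n c K \<sigma>)"
proof (rule bdd_aboveI)
  fix \<epsilon> assume "\<epsilon> \<in> Sset n c K \<sigma>"
  then have e0: "0 \<le> \<epsilon>" and ec: "entropy_cond n c K \<sigma> \<epsilon>" by (auto simp: Sset_def)
  define G where "G = gridB n c"
  show "\<epsilon> \<le> \<sigma> * sqrt (ln (real G + 1))"
  proof (cases "\<epsilon> = 0")
    case True then show ?thesis using s0 by simp
  next
    case False
    then have ep: "\<epsilon> > 0" using e0 by simp
    have le: "local_packing n c K \<epsilon> \<le> enat G" unfolding G_def by (rule local_packing_le[OF n1 c0 ep])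
    then obtain m where m: "local_packing n c K \<epsilon> = enat m" and mG: "m \<le> G"
      by (cases "local_packing n c K \<epsilon>") auto
    have "\<epsilon>\<^sup>2 / \<sigma>\<^sup>2 \<le> ln (real m)" using ec m by (simp add: entropy_cond_def)
    also have "\<dots> \<le> ln (real G + 1)"
      using mG by (cases "m = 0") (auto intro!: ln_mono)
    finally have "\<epsilon>\<^sup>2 \<le> \<sigma>\<^sup>2 * ln (real G + 1)" using s0 by (simp add: field_simps)
    then have "sqrt (\<epsilon>\<^sup>2) \<le> sqrt (\<sigma>\<^sup>2 * ln (real G + 1))" by (rule real_sqrt_le_mono)
    then show ?thesis using e0 s0 by (simp add: real_sqrt_mult)
  qed
qed

lemma eps_star_nonneg:
  assumes n1: "n \<ge> 1" and c0: "c > 0" and s0: "\<sigma> > 0"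
  shows "0 \<le> eps_star n c K \<sigma>"
proof -
  have "0 \<in> Sset n c K \<sigma>"
    by (auto simp: Sset_def entropy_cond_def ln_nat_nonneg split: enat.split)
  then show ?thesis unfolding eps_star_def Sset_def[symmetric]
    using S_bdd[OF assms] by (rule cSup_upper)
qed

lemma above_eps_star:
  assumes n1: "n \<ge> 1" and c0: "c > 0" and s0: "\<sigma> > 0" and gt: "\<epsilon> > eps_star n c K \<sigma>"
  shows "\<exists>m. local_packing n c K \<epsilon> = enat m \<and> ln (real m) < \<epsilon>\<^sup>2 / \<sigma>\<^sup>2"
proof -
  have e0: "0 \<le> \<epsilon>" using eps_star_nonneg[OF n1 c0 s0, of K] gt by linarith
  have "\<epsilon> \<notin> Sset n c K \<sigma>"
  proof
    assume "\<epsilon> \<in> Sset n c K \<sigma>"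
    then have "\<epsilon> \<le> eps_star n c K \<sigma>" unfolding eps_star_def Sset_def[symmetric]
      using S_bdd[OF n1 c0 s0] by (rule cSup_upper)
    then show False using gt by simp
  qed
  then have "\<not> entropy_cond n c K \<sigma> \<epsilon>" using e0 by (simp add: Sset_def)
  then show ?thesis by (cases "local_packing n c K \<epsilon>") (auto simp: entropy_cond_def)
qed

lemma cover:
  assumes c0: "c > 0" and r0: "r > 0" and lp: "local_packing n c K r = enat m" and tK: "\<theta> \<in> K"
  shows "\<exists>P. finite P \<and> P \<subseteq> eball n \<theta> r \<inter> K \<and> card P \<le> m \<and>
           (\<forall>v\<in>eball n \<theta> r \<inter> K. \<exists>q\<in>P. edist n v q \<le> r / c)"
proof -
  define Fam where "Fam = (\<lambda>S. finite S \<and> S \<subseteq> eball n \<theta> r \<inter> K \<and> sep_n n (r / c) S)"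
  have cardle: "card S \<le> m" if "Fam S" for S
  proof -
    have "enat (card S) \<le> packing n (r / c) (eball n \<theta> r \<inter> K)"
      using that unfolding Fam_def by (intro packing_upper) auto
    also have "\<dots> \<le> enat m" using packing_le_local[OF tK, of n r c] lp by simp
    finally show ?thesis by simp
  qed
  have "Fam {}" by (simp add: Fam_def sep_n_def)
  moreover have "\<forall>S. Fam S \<longrightarrow> card S < m + 1" using cardle by (simp add: less_Suc_eq_le)
  ultimately obtain S where FS: "Fam S" and mx: "\<And>S'. Fam S' \<Longrightarrow> card S' \<le> card S"
    using ex_has_greatest_nat[of Fam "{}" card "m + 1"] by blast
  have cov: "\<exists>q\<in>S. edist n v q \<le> r / c" if v: "v \<in> eball n \<theta> r \<inter> K" for v
  proof (rule ccontr)
    assume "\<not> (\<exists>q\<in>S. edist n v q \<le> r / c)"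
    then have far: "\<And>q. q \<in> S \<Longrightarrow> edist n v q > r / c" by force
    have vS: "v \<notin> S"
    proof
      assume "v \<in> S"
      then have "r / c < 0" using far[of v] by simp
      moreover have "0 < r / c" using c0 r0 by simp
      ultimately show False by linarith
    qed
    have "Fam (insert v S)"
      using FS v far unfolding Fam_def sep_n_def by (auto simp: edist_sym)
    then have "card (insert v S) \<le> card S" by (rule mx)
    moreover have "card (insert v S) = card S + 1" using vS FS by (simp add: Fam_def)
    ultimately show False by simp
  qed
  show ?thesis using FS cardle[OF FS] cov unfolding Fam_def by blast
qed

lemma edist_comb:
  "edist n (\<lambda>i. (1 - t) * \<mu> i + t * p i) \<mu> = \<bar>t\<bar> * edist n p \<mu>"
proof -
  have "(\<Sum>i<n. ((1 - t) * \<mu> i + t * p i - \<mu> i)\<^sup>2) = t\<^sup>2 * (\<Sum>i<n. (p i - \<mu> i)\<^sup>2)"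
    by (simp add: sum_distrib_left power2_eq_square algebra_simps)
  then show ?thesis by (simp add: edist_def enorm_def real_sqrt_mult)
qed

lemma diam_small:
  assumes c1: "c > 1" and r0: "r > 0" and lp: "local_packing n c K r = enat m" and m1: "m \<le> 1"
    and cv: "convex_n K" and sub: "K \<subseteq> Rn n" and mK: "\<mu> \<in> K" and pK: "p \<in> K"
  shows "edist n p \<mu> \<le> r / c"
proof (rule ccontr)
  assume "\<not> edist n p \<mu> \<le> r / c"
  then have dgt: "edist n p \<mu> > r / c" by simp
  define d where "d = edist n p \<mu>"
  have rc: "r / c < r" using c1 r0 by (simp add: divide_less_eq)
  obtain q where qK: "q \<in> K" and qd: "edist n q \<mu> > r / c" and qr: "edist n q \<mu> \<le> r"
  proof (cases "d \<le> r")
    case True then show ?thesis using that[of p] pK dgt by (simp add: d_def)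
  next
    case False
    define t where "t = r / d"
    have t01: "0 \<le> t" "t \<le> 1" using False r0 by (auto simp: t_def)
    have "(\<lambda>i. (1 - t) * \<mu> i + t * p i) \<in> K" using cv mK pK t01 unfolding convex_n_def by blast
    moreover have "edist n (\<lambda>i. (1 - t) * \<mu> i + t * p i) \<mu> = r"
    proof -
      have "edist n (\<lambda>i. (1 - t) * \<mu> i + t * p i) \<mu> = \<bar>t\<bar> * d" by (simp only: edist_comb d_def)
      also have "\<dots> = r" using False r0 t01 by (simp add: t_def)
      finally show ?thesis .
    qed
    ultimately show ?thesis using that rc by force
  qed
  have "sep_n n (r / c) {\<mu>, q}" using qd by (auto simp: sep_n_def edist_sym)
  moreover have "{\<mu>, q} \<subseteq> eball n \<mu> r \<inter> K"
    using mK qK qr sub r0 by (auto simp: eball_def)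
  ultimately have "enat (card {\<mu>, q}) \<le> packing n (r / c) (eball n \<mu> r \<inter> K)"
    by (intro packing_upper) auto
  also have "\<dots> \<le> enat m" using packing_le_local[OF mK, of n r c] lp by simp
  finally have "card {\<mu>, q} \<le> m" by simp
  moreover have "q \<noteq> \<mu>"
  proof
    assume "q = \<mu>"
    then have "r / c < 0" using qd by simp
    moreover have "0 < r / c" using c1 r0 by simp
    ultimately show False by linarith
  qed
  ultimately show False using m1 by simp
qed



lemma normal_exp_shift:
  assumes "\<sigma> > 0"
  shows "normal_density 0 \<sigma> x * exp (a * x) = exp (a\<^sup>2 * \<sigma>\<^sup>2 / 2) * normal_density (a * \<sigma>\<^sup>2) \<sigma> x"
proof -
  have "-(x - 0)\<^sup>2 / (2 * \<sigma>\<^sup>2) + a * x = a\<^sup>2 * \<sigma>\<^sup>2 / 2 + (-(x - a * \<sigma>\<^sup>2)\<^sup>2 / (2 * \<sigma>\<^sup>2))"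
    using assms by (simp add: field_simps power2_eq_square)
  then have "exp (-(x - 0)\<^sup>2 / (2 * \<sigma>\<^sup>2)) * exp (a * x) = exp (a\<^sup>2 * \<sigma>\<^sup>2 / 2) * exp (-(x - a * \<sigma>\<^sup>2)\<^sup>2 / (2 * \<sigma>\<^sup>2))"
    by (simp only: mult_exp_exp)
  then show ?thesis unfolding normal_density_def
    by (simp only: mult.assoc) (simp only: mult.left_commute)
qed

lemma nn_integral_normal_density: "\<sigma> > 0 \<Longrightarrow> (\<integral>\<^sup>+x. ennreal (normal_density m \<sigma> x) \<partial>lborel) = 1"
  by (subst nn_integral_eq_integral) auto

lemma normal_mgf:
  assumes "\<sigma> > 0"
  shows "(\<integral>\<^sup>+x. ennreal (exp (a * x)) \<partial>density lborel (normal_density 0 \<sigma>)) = ennreal (exp (a\<^sup>2 * \<sigma>\<^sup>2 / 2))"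
proof -
  have "(\<integral>\<^sup>+x. ennreal (exp (a * x)) \<partial>density lborel (normal_density 0 \<sigma>))
     = (\<integral>\<^sup>+x. ennreal (normal_density 0 \<sigma> x) * ennreal (exp (a * x)) \<partial>lborel)"
    by (subst nn_integral_density) auto
  also have "\<dots> = (\<integral>\<^sup>+x. ennreal (exp (a\<^sup>2 * \<sigma>\<^sup>2 / 2)) * ennreal (normal_density (a * \<sigma>\<^sup>2) \<sigma> x) \<partial>lborel)"
    by (intro nn_integral_cong) (simp add: ennreal_mult'[symmetric] normal_exp_shift[OF assms])
  also have "\<dots> = ennreal (exp (a\<^sup>2 * \<sigma>\<^sup>2 / 2))"
    by (subst nn_integral_cmult) (auto simp: nn_integral_normal_density assms)
  finally show ?thesis .
qed

lemma gauss_ps: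
  assumes "\<sigma> > 0"
  shows "product_prob_space (\<lambda>_. density lborel (normal_density 0 \<sigma>))"
proof -
  interpret prob_space "density lborel (normal_density 0 \<sigma>)" using assms by (simp add: prob_space_normal_density)
  show ?thesis
    by (simp add: product_prob_space_def product_prob_space_axioms_def product_sigma_finite_def
        prob_space_normal_density sigma_finite_measure_axioms assms)
qed

lemma gauss_prob: assumes "\<sigma> > 0" shows "prob_space (gauss n \<sigma>)"
proof -
  interpret product_prob_space "\<lambda>_. density lborel (normal_density 0 \<sigma>)" "{..<n}" by (rule gauss_ps[OF assms])
  show ?thesis unfolding gauss_def by (rule P.prob_space_axioms)
qed

lemma gauss_mgf:
  assumes "\<sigma> > 0"
  shows "(\<integral>\<^sup>+\<xi>. ennreal (exp (\<Sum>i<n. w i * \<xi> i)) \<partial>gauss n \<sigma>) = ennreal (exp (\<sigma>\<^sup>2 * (\<Sum>i<n. (w i)\<^sup>2) / 2))"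
proof -
  interpret product_prob_space "\<lambda>_. density lborel (normal_density 0 \<sigma>)" "{..<n}" by (rule gauss_ps[OF assms])
  have "(\<integral>\<^sup>+\<xi>. ennreal (exp (\<Sum>i<n. w i * \<xi> i)) \<partial>gauss n \<sigma>)
      = (\<integral>\<^sup>+\<xi>. (\<Prod>i\<in>{..<n}. (\<lambda>i x. ennreal (exp (w i * x))) i (\<xi> i)) \<partial>gauss n \<sigma>)"
    by (intro nn_integral_cong) (simp add: exp_sum prod_ennreal)
  also have "\<dots> = (\<Prod>i\<in>{..<n}. ennreal (exp ((w i)\<^sup>2 * \<sigma>\<^sup>2 / 2)))"
    unfolding gauss_def
    by (subst product_nn_integral_prod) (auto simp: normal_mgf[OF assms])
  also have "\<dots> = ennreal (exp (\<sigma>\<^sup>2 * (\<Sum>i<n. (w i)\<^sup>2) / 2))"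
    by (simp add: prod_ennreal exp_sum[symmetric] sum_distrib_left sum_divide_distrib mult.commute)
  finally show ?thesis .
qed


definition goodf :: "nat \<Rightarrow> real \<Rightarrow> ((nat \<Rightarrow> real) \<Rightarrow> real) \<Rightarrow> real \<Rightarrow> bool" where
  "goodf n \<sigma> G B \<longleftrightarrow> G \<in> borel_measurable (gauss n \<sigma>) \<and> (\<forall>\<xi>. 0 \<le> G \<xi>) \<and> 0 \<le> B \<and>
     (\<integral>\<^sup>+\<xi>. ennreal (G \<xi>) \<partial>gauss n \<sigma>) \<le> ennreal B"

lemma good_exp:
  assumes s0: "\<sigma> > 0"
  shows "goodf n \<sigma> (\<lambda>\<xi>. exp (ip n w \<xi>)) (exp (\<sigma>\<^sup>2 * (\<Sum>i<n. (w i)\<^sup>2) / 2))"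
proof -
  have m: "(\<lambda>\<xi>. exp (\<Sum>i<n. w i * \<xi> i)) \<in> borel_measurable (gauss n \<sigma>)"
    unfolding gauss_def by measurable
  show ?thesis unfolding goodf_def ip_def using m gauss_mgf[OF s0, of n w] by simp
qed

lemma good_add:
  assumes "goodf n \<sigma> G1 B1" "goodf n \<sigma> G2 B2"
  shows "goodf n \<sigma> (\<lambda>\<xi>. G1 \<xi> + G2 \<xi>) (B1 + B2)"
proof -
  have m1: "G1 \<in> borel_measurable (gauss n \<sigma>)" and m2: "G2 \<in> borel_measurable (gauss n \<sigma>)"
    using assms by (auto simp: goodf_def)
  have "(\<integral>\<^sup>+\<xi>. ennreal (G1 \<xi> + G2 \<xi>) \<partial>gauss n \<sigma>) = (\<integral>\<^sup>+\<xi>. ennreal (G1 \<xi>) + ennreal (G2 \<xi>) \<partial>gauss n \<sigma>)"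
    using assms by (intro nn_integral_cong) (auto simp: goodf_def ennreal_plus)
  also have "\<dots> = (\<integral>\<^sup>+\<xi>. ennreal (G1 \<xi>) \<partial>gauss n \<sigma>) + (\<integral>\<^sup>+\<xi>. ennreal (G2 \<xi>) \<partial>gauss n \<sigma>)"
    using m1 m2 by (intro nn_integral_add) auto
  also have "\<dots> \<le> ennreal B1 + ennreal B2" using assms by (intro add_mono) (auto simp: goodf_def)
  also have "\<dots> = ennreal (B1 + B2)" using assms by (simp add: goodf_def ennreal_plus)
  finally show ?thesis using assms m1 m2 by (auto simp: goodf_def)
qed

lemma good_scale:
  assumes "goodf n \<sigma> G B" "c \<ge> 0"
  shows "goodf n \<sigma> (\<lambda>\<xi>. c * G \<xi>) (c * B)"
proof -
  have m: "G \<in> borel_measurable (gauss n \<sigma>)" using assms by (auto simp: goodf_def)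
  have "(\<integral>\<^sup>+\<xi>. ennreal (c * G \<xi>) \<partial>gauss n \<sigma>) = (\<integral>\<^sup>+\<xi>. ennreal c * ennreal (G \<xi>) \<partial>gauss n \<sigma>)"
    using assms by (intro nn_integral_cong) (auto simp: goodf_def ennreal_mult)
  also have "\<dots> = ennreal c * (\<integral>\<^sup>+\<xi>. ennreal (G \<xi>) \<partial>gauss n \<sigma>)"
    using m by (intro nn_integral_cmult) auto
  also have "\<dots> \<le> ennreal c * ennreal B" using assms by (intro mult_left_mono) (auto simp: goodf_def)
  also have "\<dots> = ennreal (c * B)" using assms by (simp add: goodf_def ennreal_mult)
  finally show ?thesis using assms m by (auto simp: goodf_def)
qed

lemma good_const:
  assumes s0: "\<sigma> > 0" and c0: "c \<ge> 0"
  shows "goodf n \<sigma> (\<lambda>\<xi>. c) c"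
proof -
  interpret prob_space "gauss n \<sigma>" by (rule gauss_prob[OF s0])
  show ?thesis using c0 by (simp add: goodf_def emeasure_space_1)
qed

lemma good_mono: "goodf n \<sigma> G B \<Longrightarrow> B \<le> B' \<Longrightarrow> goodf n \<sigma> G B'"
  unfolding goodf_def by (auto intro: order_trans ennreal_leI)

lemma good_sum:
  assumes s0: "\<sigma> > 0" and fin: "finite J" and g: "\<And>j. j \<in> J \<Longrightarrow> goodf n \<sigma> (G j) (B j)"
  shows "goodf n \<sigma> (\<lambda>\<xi>. \<Sum>j\<in>J. G j \<xi>) (\<Sum>j\<in>J. B j)"
  using fin g
proof (induction J rule: finite_induct)
  case empty
  then show ?case using good_const[OF s0, of 0 n] by simp
next
  case (insert j J)
  then show ?case by (simp add: good_add)
qed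

lemma good_bound:
  assumes "goodf n \<sigma> G B" "\<And>\<xi>. F \<xi> \<le> G \<xi>"
  shows "(\<integral>\<^sup>+\<xi>. ennreal (F \<xi>) \<partial>gauss n \<sigma>) \<le> ennreal B"
proof -
  have "(\<integral>\<^sup>+\<xi>. ennreal (F \<xi>) \<partial>gauss n \<sigma>) \<le> (\<integral>\<^sup>+\<xi>. ennreal (G \<xi>) \<partial>gauss n \<sigma>)"
    using assms by (intro nn_integral_mono ennreal_leI) auto
  also have "\<dots> \<le> ennreal B" using assms by (simp add: goodf_def)
  finally show ?thesis .
qed

lemma ip_scale: "ip n (\<lambda>i. a * w i) \<xi> = a * ip n w \<xi>"
  by (simp add: ip_def sum_distrib_left mult.assoc)

lemma ip_comm: "ip n x y = ip n y x"
  by (simp add: ip_def mult.commute)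

lemma good_exp_scaled:
  assumes s0: "\<sigma> > 0" and wR: "enorm n w \<le> R"
  shows "goodf n \<sigma> (\<lambda>\<xi>. exp (a * ip n w \<xi>)) (exp (a\<^sup>2 * \<sigma>\<^sup>2 * R\<^sup>2 / 2))"
proof -
  have g: "goodf n \<sigma> (\<lambda>\<xi>. exp (ip n (\<lambda>i. a * w i) \<xi>)) (exp (\<sigma>\<^sup>2 * (\<Sum>i<n. (a * w i)\<^sup>2) / 2))"
    by (rule good_exp[OF s0])
  have "(\<Sum>i<n. (a * w i)\<^sup>2) = a\<^sup>2 * (enorm n w)\<^sup>2"
    by (simp add: enorm_sq power_mult_distrib sum_distrib_left)
  also have "\<dots> \<le> a\<^sup>2 * R\<^sup>2" using wR by (intro mult_left_mono power_mono) auto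
  finally have "\<sigma>\<^sup>2 * (\<Sum>i<n. (a * w i)\<^sup>2) \<le> \<sigma>\<^sup>2 * (a\<^sup>2 * R\<^sup>2)"
    by (rule mult_left_mono) simp
  then have "\<sigma>\<^sup>2 * (\<Sum>i<n. (a * w i)\<^sup>2) / 2 \<le> \<sigma>\<^sup>2 * (a\<^sup>2 * R\<^sup>2) / 2"
    by (rule divide_right_mono) simp
  moreover have "\<sigma>\<^sup>2 * (a\<^sup>2 * R\<^sup>2) / 2 = a\<^sup>2 * \<sigma>\<^sup>2 * R\<^sup>2 / 2" by (simp add: mult_ac)
  ultimately have "\<sigma>\<^sup>2 * (\<Sum>i<n. (a * w i)\<^sup>2) / 2 \<le> a\<^sup>2 * \<sigma>\<^sup>2 * R\<^sup>2 / 2" by simp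
  then show ?thesis using good_mono[OF g] by (simp add: ip_scale)
qed



lemma sq_le_exp: "0 \<le> (y::real) \<Longrightarrow> y\<^sup>2 \<le> 2 * exp y"
  using exp_lower_Taylor_quadratic[of y] by simp

lemma sq_le_cosh: "(y::real)\<^sup>2 \<le> 2 * (exp y + exp (- y))"
proof (cases "y \<ge> 0")
  case True
  then show ?thesis using sq_le_exp[of y] by (smt (verit) exp_gt_zero)
next
  case False
  then show ?thesis using sq_le_exp[of "-y"] by (smt (verit) exp_gt_zero power2_minus)
qed

definition unitv :: "nat \<Rightarrow> nat \<Rightarrow> real" where "unitv k = (\<lambda>i. if i = k then 1 else 0)"

lemma ip_unitv: "k < n \<Longrightarrow> ip n (unitv k) \<xi> = \<xi> k"
proof -
  assume "k < n"
  have e: "(\<lambda>i. unitv k i * \<xi> i) = (\<lambda>i. if i = k then \<xi> k else 0)" by (auto simp: unitv_def)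
  show ?thesis unfolding ip_def e using \<open>k < n\<close> by simp
qed

lemma enorm_unitv: "enorm n (unitv k) \<le> 1"
proof -
  have "(\<lambda>i. (unitv k i)\<^sup>2) = (\<lambda>i. if i = k then 1 else (0::real))" by (auto simp: unitv_def)
  then have "(\<Sum>i<n. (unitv k i)\<^sup>2) = (if k < n then 1 else 0)" unfolding \<open>(\<lambda>i. (unitv k i)\<^sup>2) = _\<close> by simp
  then show ?thesis by (simp add: enorm_def)
qed

definition Gxi :: "nat \<Rightarrow> real \<Rightarrow> (nat \<Rightarrow> real) \<Rightarrow> real" where
  "Gxi n \<sigma> \<xi> = (\<Sum>k<n. 2 * \<sigma>\<^sup>2 * (exp ((1/\<sigma>) * ip n (unitv k) \<xi>) + exp ((- 1/\<sigma>) * ip n (unitv k) \<xi>)))"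

lemma Gxi_good:
  assumes s0: "\<sigma> > 0"
  shows "goodf n \<sigma> (Gxi n \<sigma>) (8 * real n * \<sigma>\<^sup>2)"
proof -
  have e: "exp ((1/\<sigma>)\<^sup>2 * \<sigma>\<^sup>2 * 1\<^sup>2 / 2) = exp (1/2)" "exp ((-1/\<sigma>)\<^sup>2 * \<sigma>\<^sup>2 * 1\<^sup>2 / 2) = exp (1/2)"
    using s0 by (simp_all add: power_divide)
  have g: "goodf n \<sigma> (\<lambda>\<xi>. exp ((1/\<sigma>) * ip n (unitv k) \<xi>) + exp ((- 1/\<sigma>) * ip n (unitv k) \<xi>)) (exp (1/2) + exp (1/2))" for k
    using good_add[OF good_exp_scaled[OF s0 enorm_unitv[of n k], where a="1/\<sigma>"] good_exp_scaled[OF s0 enorm_unitv[of n k], where a="-1/\<sigma>"]]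
    by (simp only: e)
  have "goodf n \<sigma> (Gxi n \<sigma>) (\<Sum>k<n. 2 * \<sigma>\<^sup>2 * (exp (1/2) + exp (1/2)))"
    unfolding Gxi_def by (intro good_sum[OF s0] good_scale[OF g]) auto
  moreover have "(\<Sum>k<n. 2 * \<sigma>\<^sup>2 * (exp (1/2) + exp (1/2))) \<le> 8 * real n * \<sigma>\<^sup>2"
  proof -
    have "(\<Sum>k<n. 2 * \<sigma>\<^sup>2 * (exp (1/2) + exp (1/2))) = real n * (4 * exp (1/2)) * \<sigma>\<^sup>2" by simp
    also have "\<dots> \<le> real n * 8 * \<sigma>\<^sup>2" using exp_half_le2 by (intro mult_right_mono mult_left_mono) auto
    finally show ?thesis by simp
  qed
  ultimately show ?thesis by (rule good_mono)
qed

lemma Gxi_pw: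
  assumes s0: "\<sigma> > 0"
  shows "(enorm n \<xi>)\<^sup>2 \<le> Gxi n \<sigma> \<xi>"
proof -
  have "(\<xi> k)\<^sup>2 \<le> 2 * \<sigma>\<^sup>2 * (exp ((1/\<sigma>) * ip n (unitv k) \<xi>) + exp ((- 1/\<sigma>) * ip n (unitv k) \<xi>))"
    if "k < n" for k
  proof -
    have "(\<xi> k)\<^sup>2 = \<sigma>\<^sup>2 * (\<xi> k / \<sigma>)\<^sup>2" using s0 by (simp add: power_divide)
    also have "\<dots> \<le> \<sigma>\<^sup>2 * (2 * (exp (\<xi> k / \<sigma>) + exp (- (\<xi> k / \<sigma>))))"
      by (intro mult_left_mono sq_le_cosh) auto
    also have "\<dots> = 2 * \<sigma>\<^sup>2 * (exp ((1/\<sigma>) * ip n (unitv k) \<xi>) + exp ((- 1/\<sigma>) * ip n (unitv k) \<xi>))"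
      using that by (simp add: ip_unitv)
    finally show ?thesis .
  qed
  then show ?thesis unfolding Gxi_def enorm_sq by (intro sum_mono) auto
qed

definition Zf :: "nat \<Rightarrow> (nat \<Rightarrow> real) set \<Rightarrow> (nat \<Rightarrow> real) \<Rightarrow> real" where
  "Zf n W \<xi> = Max (insert 0 ((\<lambda>w. \<bar>ip n \<xi> w\<bar>) ` W))"

lemma Zf_nonneg: "finite W \<Longrightarrow> 0 \<le> Zf n W \<xi>"
  unfolding Zf_def by (rule Max_ge) auto

lemma Zf_ge: "finite W \<Longrightarrow> w \<in> W \<Longrightarrow> \<bar>ip n \<xi> w\<bar> \<le> Zf n W \<xi>"
  unfolding Zf_def by (rule Max_ge) auto

lemma Zf_pw:
  assumes fin: "finite W" and a0: "a > 0" and l0: "l > 0"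
  shows "(Zf n W \<xi>)\<^sup>2 \<le> 2 * a\<^sup>2 + (4 / l\<^sup>2) * exp (- l * a) *
           (\<Sum>w\<in>W. exp (l * ip n w \<xi>) + exp ((- l) * ip n w \<xi>))"
proof -
  define Z where "Z = Zf n W \<xi>"
  define S where "S = (\<Sum>w\<in>W. exp (l * ip n w \<xi>) + exp ((- l) * ip n w \<xi>))"
  have S0: "0 \<le> S" unfolding S_def by (intro sum_nonneg) (auto intro: add_nonneg_nonneg)
  have rest0: "0 \<le> (4 / l\<^sup>2) * exp (- l * a) * S" using S0 by simp
  have Z0: "0 \<le> Z" unfolding Z_def by (rule Zf_nonneg[OF fin])
  show ?thesis
  proof (cases "Z \<le> a")
    case True
    then have "Z\<^sup>2 \<le> a\<^sup>2" using Z0 by (intro power_mono) auto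
    moreover have "0 \<le> a\<^sup>2" by simp
    ultimately have "Z\<^sup>2 \<le> 2 * a\<^sup>2 + (4 / l\<^sup>2) * exp (- l * a) * S" using rest0 by linarith
    then show ?thesis by (simp only: Z_def S_def)
  next
    case False
    have "Z \<in> insert 0 ((\<lambda>w. \<bar>ip n \<xi> w\<bar>) ` W)" unfolding Z_def Zf_def using fin by (intro Max_in) auto
    moreover have "Z \<noteq> 0" using False a0 by auto
    ultimately obtain w0 where w0: "w0 \<in> W" and Zw: "Z = \<bar>ip n \<xi> w0\<bar>" by auto
    have "2 * a\<^sup>2 + 2 * (Z - a)\<^sup>2 - Z\<^sup>2 = (Z - 2 * a)\<^sup>2" by (simp add: power2_eq_square algebra_simps)
    then have "Z\<^sup>2 \<le> 2 * a\<^sup>2 + 2 * (Z - a)\<^sup>2" using zero_le_power2[of "Z - 2 * a"] by linarith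
    moreover have "(Z - a)\<^sup>2 \<le> (2 / l\<^sup>2) * exp (l * (Z - a))"
    proof -
      have "(Z - a)\<^sup>2 = (l * (Z - a))\<^sup>2 / l\<^sup>2" using l0 by (simp add: power_mult_distrib)
      also have "\<dots> \<le> (2 * exp (l * (Z - a))) / l\<^sup>2"
        using False l0 by (intro divide_right_mono sq_le_exp) auto
      finally show ?thesis by simp
    qed
    moreover have "exp (l * (Z - a)) \<le> exp (- l * a) * S"
    proof -
      have "exp (l * Z) \<le> exp (l * ip n w0 \<xi>) + exp ((- l) * ip n w0 \<xi>)"
        unfolding Zw ip_comm[of n \<xi> w0] by (cases "ip n w0 \<xi> \<ge> 0") (auto simp: add_increasing add_increasing2)
      also have "\<dots> \<le> S" unfolding S_def using fin w0
        by (intro member_le_sum[where f = "\<lambda>w. exp (l * ip n w \<xi>) + exp ((- l) * ip n w \<xi>)"])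
           (auto intro: add_nonneg_nonneg)
      finally have "exp (l * Z) \<le> S" .
      then have "exp (- l * a) * exp (l * Z) \<le> exp (- l * a) * S" by (intro mult_left_mono) auto
      moreover have "exp (l * (Z - a)) = exp (- l * a) * exp (l * Z)"
        by (simp add: exp_diff exp_minus divide_inverse algebra_simps)
      ultimately show ?thesis by simp
    qed
    moreover have "(2 / l\<^sup>2) * exp (l * (Z - a)) \<le> (2 / l\<^sup>2) * (exp (- l * a) * S)"
      using calculation(3) by (intro mult_left_mono) auto
    ultimately have "Z\<^sup>2 \<le> 2 * a\<^sup>2 + 2 * ((2 / l\<^sup>2) * (exp (- l * a) * S))"
      by linarith
    then show ?thesis by (simp add: Z_def S_def mult.assoc)
  qed
qed

lemma ln4_ge1: "1 \<le> ln (4::real)"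
proof -
  have "exp (1::real) = exp (1/2) * exp (1/2)" unfolding mult_exp_exp by simp
  also have "\<dots> \<le> 2 * 2" using exp_half_le2 by (intro mult_mono) auto
  finally have "exp (1::real) \<le> 4" by simp
  then show ?thesis by (simp add: ln_ge_iff)
qed

lemma Z_good:
  assumes fin: "finite W" and R0: "R > 0" and s0: "\<sigma> > 0" and wR: "\<And>w. w \<in> W \<Longrightarrow> enorm n w \<le> R"
  shows "\<exists>G. goodf n \<sigma> G (\<sigma>\<^sup>2 * R\<^sup>2 * (4 * ln (4 * (real (card W) + 1)) + 2)) \<and> (\<forall>\<xi>. (Zf n W \<xi>)\<^sup>2 \<le> G \<xi>)"
proof -
  define N where "N = real (card W)"
  define L where "L = ln (4 * (N + 1))"
  define q where "q = \<sigma>\<^sup>2 * R\<^sup>2"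
  have q0: "q > 0" using s0 R0 by (simp add: q_def)
  have N0: "N \<ge> 0" by (simp add: N_def)
  have L1: "L \<ge> 1"
  proof -
    have "ln 4 \<le> ln (4 * (N + 1))" using N0 by (subst ln_le_cancel_iff) auto
    then show ?thesis using ln4_ge1 by (simp add: L_def)
  qed
  define a where "a = sqrt (2 * q * L)"
  have a2: "a\<^sup>2 = 2 * q * L" using q0 L1 by (simp add: a_def)
  have a0: "a > 0" using q0 L1 by (simp add: a_def)
  define l where "l = a / q"
  have l0: "l > 0" using a0 q0 by (simp add: l_def)
  have la: "l * a = 2 * L" using a2 q0 by (simp add: l_def power2_eq_square field_simps)
  have lq: "l\<^sup>2 * \<sigma>\<^sup>2 * R\<^sup>2 / 2 = L"
    using a2 q0 s0 R0 by (simp add: l_def q_def power_divide field_simps)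
  have ll: "4 / l\<^sup>2 = 2 * q / L" using a2 q0 L1 by (simp add: l_def power_divide field_simps power2_eq_square)
  define G where "G = (\<lambda>\<xi>. 2 * a\<^sup>2 + (4 / l\<^sup>2) * exp (- l * a) *
           (\<Sum>w\<in>W. exp (l * ip n w \<xi>) + exp ((- l) * ip n w \<xi>)))"
  have gw: "goodf n \<sigma> (\<lambda>\<xi>. exp (l * ip n w \<xi>) + exp ((- l) * ip n w \<xi>)) (exp L + exp L)" if "w \<in> W" for w
    using good_add[OF good_exp_scaled[OF s0 wR[OF that], where a=l] good_exp_scaled[OF s0 wR[OF that], where a="-l"]]
    by (simp add: lq)
  have gG: "goodf n \<sigma> G (2 * a\<^sup>2 + (4 / l\<^sup>2) * exp (- l * a) * (\<Sum>w\<in>W. exp L + exp L))"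
    unfolding G_def
    by (intro good_add good_const[OF s0] good_scale good_sum[OF s0 fin] gw) auto
  have "(4 / l\<^sup>2) * exp (- l * a) * (\<Sum>w\<in>W. exp L + exp L) = (2 * q / L) * (2 * N * (exp (- (2 * L)) * exp L))"
    using la ll by (simp add: N_def mult_ac)
  also have "exp (- (2 * L)) * exp L = 1 / (4 * (N + 1))"
  proof -
    have "exp (- (2 * L)) * exp L = exp (- L)" by (simp add: mult_exp_exp)
    also have "\<dots> = 1 / (4 * (N + 1))" using N0 by (simp add: L_def exp_minus exp_ln inverse_eq_divide)
    finally show ?thesis .
  qed
  also have "(2 * q / L) * (2 * N * (1 / (4 * (N + 1)))) \<le> (2 * q / L) * 1"
    using q0 L1 N0 by (intro mult_left_mono) (auto simp: field_simps)
  also have "(2 * q / L) * 1 \<le> 2 * q" using q0 L1 by (simp add: field_simps)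
  finally have b: "(4 / l\<^sup>2) * exp (- l * a) * (\<Sum>w\<in>W. exp L + exp L) \<le> 2 * q" .
  have "2 * a\<^sup>2 + (4 / l\<^sup>2) * exp (- l * a) * (\<Sum>w\<in>W. exp L + exp L) \<le> \<sigma>\<^sup>2 * R\<^sup>2 * (4 * ln (4 * (real (card W) + 1)) + 2)"
    using b a2 by (simp add: q_def L_def N_def algebra_simps)
  with gG have "goodf n \<sigma> G (\<sigma>\<^sup>2 * R\<^sup>2 * (4 * ln (4 * (real (card W) + 1)) + 2))" by (rule good_mono)
  moreover have "\<forall>\<xi>. (Zf n W \<xi>)\<^sup>2 \<le> G \<xi>" unfolding G_def using Zf_pw[OF fin a0 l0] by blast
  ultimately show ?thesis by blast
qed



primrec lvl :: "(nat \<Rightarrow> (nat \<Rightarrow> real) \<Rightarrow> (nat \<Rightarrow> real) set) \<Rightarrow> (nat \<Rightarrow> real) \<Rightarrow> nat \<Rightarrow> (nat \<Rightarrow> real) set" where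
  "lvl N \<mu> 0 = {\<mu>}"
| "lvl N \<mu> (Suc j) = (\<Union>p\<in>lvl N \<mu> j. N j p)"

definition links :: "(nat \<Rightarrow> (nat \<Rightarrow> real) \<Rightarrow> (nat \<Rightarrow> real) set) \<Rightarrow> (nat \<Rightarrow> real) \<Rightarrow> nat \<Rightarrow> (nat \<Rightarrow> real) set" where
  "links N \<mu> j = (\<lambda>(p, q). (\<lambda>i. q i - p i)) ` (SIGMA p:lvl N \<mu> j. N j p)"

locale netting =
  fixes n :: nat and K :: "(nat \<Rightarrow> real) set" and L :: nat and r :: "nat \<Rightarrow> real"
    and N :: "nat \<Rightarrow> (nat \<Rightarrow> real) \<Rightarrow> (nat \<Rightarrow> real) set" and m :: "nat \<Rightarrow> nat" and \<mu> :: "nat \<Rightarrow> real"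
  assumes Nfin: "\<And>j \<theta>. j < L \<Longrightarrow> \<theta> \<in> K \<Longrightarrow> finite (N j \<theta>)"
    and Nsub: "\<And>j \<theta>. j < L \<Longrightarrow> \<theta> \<in> K \<Longrightarrow> N j \<theta> \<subseteq> eball n \<theta> (r j) \<inter> K"
    and Ncard: "\<And>j \<theta>. j < L \<Longrightarrow> \<theta> \<in> K \<Longrightarrow> card (N j \<theta>) \<le> m j"
    and Ncov: "\<And>j \<theta> v. j < L \<Longrightarrow> \<theta> \<in> K \<Longrightarrow> v \<in> eball n \<theta> (r j) \<inter> K \<Longrightarrow> \<exists>q\<in>N j \<theta>. edist n v q \<le> r (Suc j)"
    and muK: "\<mu> \<in> K"
    and KRn: "K \<subseteq> Rn n"
begin

lemma lvl_props: "j \<le> L \<Longrightarrow> lvl N \<mu> j \<subseteq> K \<and> finite (lvl N \<mu> j) \<and> card (lvl N \<mu> j) \<le> (\<Prod>k<j. m k)"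
proof (induction j)
  case 0
  then show ?case using muK by simp
next
  case (Suc j)
  then have IH: "lvl N \<mu> j \<subseteq> K" "finite (lvl N \<mu> j)" "card (lvl N \<mu> j) \<le> (\<Prod>k<j. m k)" and jL: "j < L" by auto
  have sub: "lvl N \<mu> (Suc j) \<subseteq> K" using IH(1) Nsub[OF jL] by auto
  have fin: "finite (lvl N \<mu> (Suc j))" using IH Nfin[OF jL] by auto
  have "card (lvl N \<mu> (Suc j)) \<le> (\<Sum>p\<in>lvl N \<mu> j. card (N j p))" by (simp add: card_UN_le IH(2))
  also have "\<dots> \<le> (\<Sum>p\<in>lvl N \<mu> j. m j)" using IH(1) Ncard[OF jL] by (intro sum_mono) auto
  also have "\<dots> = card (lvl N \<mu> j) * m j" by simp
  also have "\<dots> \<le> (\<Prod>k<j. m k) * m j" using IH(3) by simp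
  also have "\<dots> = (\<Prod>k<Suc j. m k)" by simp
  finally show ?case using sub fin by simp
qed

lemma links_props:
  assumes jL: "j < L"
  shows "finite (links N \<mu> j) \<and> card (links N \<mu> j) \<le> (\<Prod>k<Suc j. m k) \<and> (\<forall>w\<in>links N \<mu> j. enorm n w \<le> r j)"
proof -
  have P: "lvl N \<mu> j \<subseteq> K" "finite (lvl N \<mu> j)" "card (lvl N \<mu> j) \<le> (\<Prod>k<j. m k)"
    using lvl_props[of j] jL by auto
  have finS: "finite (SIGMA p:lvl N \<mu> j. N j p)" using P Nfin[OF jL] by auto
  have "card (links N \<mu> j) \<le> card (SIGMA p:lvl N \<mu> j. N j p)" unfolding links_def by (rule card_image_le[OF finS])
  also have "\<dots> = (\<Sum>p\<in>lvl N \<mu> j. card (N j p))" using P Nfin[OF jL] by (subst card_SigmaI) auto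
  also have "\<dots> \<le> (\<Sum>p\<in>lvl N \<mu> j. m j)" using P(1) Ncard[OF jL] by (intro sum_mono) auto
  also have "\<dots> = card (lvl N \<mu> j) * m j" by simp
  also have "\<dots> \<le> (\<Prod>k<j. m k) * m j" using P(3) by simp
  also have "\<dots> = (\<Prod>k<Suc j. m k)" by simp
  finally have c: "card (links N \<mu> j) \<le> (\<Prod>k<Suc j. m k)" .
  have nr: "enorm n w \<le> r j" if wl: "w \<in> links N \<mu> j" for w
  proof -
    obtain p q where pq: "p \<in> lvl N \<mu> j" "q \<in> N j p" and w: "w = (\<lambda>i. q i - p i)"
      using wl unfolding links_def by (auto split: prod.splits)
    have "q \<in> eball n p (r j)" using Nsub[OF jL] P(1) pq by blast
    then show ?thesis by (simp add: w eball_def edist_def)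
  qed
  show ?thesis using c nr finS unfolding links_def by auto
qed

lemma chain:
  assumes vK: "v \<in> K" and v0: "edist n v \<mu> \<le> r 0"
  shows "j \<le> L \<Longrightarrow> \<exists>p\<in>lvl N \<mu> j. edist n v p \<le> r j \<and>
     ip n \<xi> (\<lambda>i. v i - \<mu> i) \<le> (\<Sum>k<j. Zf n (links N \<mu> k) \<xi>) + ip n \<xi> (\<lambda>i. v i - p i)"
proof (induction j)
  case 0
  then show ?case using v0 by simp
next
  case (Suc j)
  then have jL: "j < L" by simp
  from Suc obtain p where p: "p \<in> lvl N \<mu> j" and vp: "edist n v p \<le> r j"
    and ch: "ip n \<xi> (\<lambda>i. v i - \<mu> i) \<le> (\<Sum>k<j. Zf n (links N \<mu> k) \<xi>) + ip n \<xi> (\<lambda>i. v i - p i)" by auto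
  have pK: "p \<in> K" using p lvl_props[of j] jL by auto
  have "v \<in> eball n p (r j) \<inter> K" using vK vp KRn by (auto simp: eball_def)
  then obtain q where q: "q \<in> N j p" and vq: "edist n v q \<le> r (Suc j)" using Ncov[OF jL pK] by blast
  have qlvl: "q \<in> lvl N \<mu> (Suc j)" using p q by auto
  have wl: "(\<lambda>i. q i - p i) \<in> links N \<mu> j" unfolding links_def using p q by force
  have fl: "finite (links N \<mu> j)" using links_props[OF jL] by simp
  have "ip n \<xi> (\<lambda>i. v i - p i) = ip n \<xi> (\<lambda>i. q i - p i) + ip n \<xi> (\<lambda>i. v i - q i)"
    by (simp add: ip_def sum.distrib[symmetric] algebra_simps)
  also have "ip n \<xi> (\<lambda>i. q i - p i) \<le> Zf n (links N \<mu> j) \<xi>"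
    using Zf_ge[OF fl wl, of n \<xi>] by linarith
  finally have "ip n \<xi> (\<lambda>i. v i - \<mu> i) \<le> (\<Sum>k<Suc j. Zf n (links N \<mu> k) \<xi>) + ip n \<xi> (\<lambda>i. v i - q i)"
    using ch by simp
  then show ?case using qlvl vq by blast
qed

end



lemma geom_le:
  fixes x :: real
  assumes "0 \<le> x" "x < 1"
  shows "(\<Sum>k<j. x ^ k) \<le> 1 / (1 - x)"
proof -
  have "(\<Sum>k<j. x ^ k) = (1 - x ^ j) / (1 - x)" using assms by (simp add: sum_gp_strict)
  also have "\<dots> \<le> 1 / (1 - x)" using assms by (intro divide_right_mono) auto
  finally show ?thesis .
qed

lemma inv_one_minus: "(y::real) \<ge> 2 \<Longrightarrow> 1 / (1 - 1 / y) \<le> 2"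
proof -
  assume y: "y \<ge> 2"
  have "1 / (1 - 1 / y) = y / (y - 1)" using y by (simp add: field_simps)
  also have "\<dots> \<le> 2" using y by (simp add: divide_le_eq)
  finally show ?thesis .
qed

lemma geom_r:
  fixes c s :: real
  assumes c2: "c \<ge> 2" and s0: "s > 0"
  shows "(\<Sum>k<j. s / c ^ k) \<le> 2 * s"
proof -
  have "(\<Sum>k<j. s / c ^ k) = s * (\<Sum>k<j. (1 / c) ^ k)" by (simp add: sum_distrib_left power_one_over)
  also have "(\<Sum>k<j. (1 / c) ^ k) \<le> 1 / (1 - 1 / c)" using c2 by (intro geom_le) auto
  also have "1 / (1 - 1 / c) \<le> 2" using c2 by (rule inv_one_minus)
  finally show ?thesis using s0 by (simp add: mult_left_mono)
qed

lemma geom_r2: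
  fixes c s :: real
  assumes c2: "c \<ge> 2" and s0: "s > 0"
  shows "(\<Sum>k<j. (s / c ^ k)\<^sup>2) \<le> 2 * s\<^sup>2"
proof -
  have "(\<Sum>k<j. (s / c ^ k)\<^sup>2) = s\<^sup>2 * (\<Sum>k<j. (1 / c\<^sup>2) ^ k)"
    by (simp add: sum_distrib_left power_divide power_one_over power_mult[symmetric] mult.commute)
  also have "(\<Sum>k<j. (1 / c\<^sup>2) ^ k) \<le> 1 / (1 - 1 / c\<^sup>2)"
  proof (intro geom_le)
    have "c\<^sup>2 \<ge> 4" using c2 power_mono[of 2 c 2] by simp
    then show "1 / c\<^sup>2 < 1" by (simp add: divide_less_eq)
  qed simp
  also have "1 / (1 - 1 / c\<^sup>2) \<le> 2"
  proof -
    have "c\<^sup>2 \<ge> 4" using c2 power_mono[of 2 c 2] by simp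
    then show ?thesis by (intro inv_one_minus) simp
  qed
  finally show ?thesis by (simp add: mult_left_mono)
qed

lemma cs_weighted:
  fixes r Z :: "nat \<Rightarrow> real"
  assumes "\<And>i. i < L \<Longrightarrow> r i > 0"
  shows "(\<Sum>i<L. Z i)\<^sup>2 \<le> (\<Sum>i<L. r i) * (\<Sum>i<L. (Z i)\<^sup>2 / r i)"
proof -
  have "(\<Sum>i<L. Z i) = (\<Sum>i<L. sqrt (r i) * (Z i / sqrt (r i)))"
  proof (intro sum.cong refl)
    fix i assume "i \<in> {..<L}"
    then have "r i > 0" using assms by simp
    then show "Z i = sqrt (r i) * (Z i / sqrt (r i))" by simp
  qed
  then have "(\<Sum>i<L. Z i)\<^sup>2 \<le> (\<Sum>i<L. (sqrt (r i))\<^sup>2) * (\<Sum>i<L. (Z i / sqrt (r i))\<^sup>2)"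
    by (simp only: Cauchy_Schwarz_ineq_sum)
  also have "\<dots> = (\<Sum>i<L. r i) * (\<Sum>i<L. (Z i)\<^sup>2 / r i)"
    using assms by (intro arg_cong2[where f="(*)"] sum.cong) (auto simp: power_divide less_imp_le)
  finally show ?thesis .
qed

lemma ln8_le3: "ln (8::real) \<le> 3"
proof -
  have "2 \<le> exp (1::real)" using exp_ge_add_one_self[of 1] by simp
  then have "2 ^ 3 \<le> exp (1::real) ^ 3" by (intro power_mono) auto
  then have "8 \<le> exp (3::real)" by (simp add: exp_of_nat_mult[symmetric])
  then have "ln 8 \<le> ln (exp (3::real))" by (subst ln_le_cancel_iff) auto
  then show ?thesis by simp
qed



lemma ip_diff_scale:
  "ip n \<xi> (\<lambda>i. ((1 - a) * \<mu> i + a * \<nu> i) - \<mu> i) = a * ip n \<xi> (\<lambda>i. \<nu> i - \<mu> i)"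
  by (simp add: ip_def sum_distrib_left algebra_simps)

lemma basic_pw:
  assumes ne: "K \<noteq> {}" and sub: "K \<subseteq> Rn n" and cl: "closed_n n K" and cv: "convex_n K" and mK: "\<mu> \<in> K"
    and s0: "s > 0"
    and chainF: "\<And>v. v \<in> K \<Longrightarrow> edist n v \<mu> \<le> s \<Longrightarrow> ip n \<xi> (\<lambda>i. v i - \<mu> i) \<le> F"
  shows "(edist n (lse n K (shift n \<mu> \<xi>)) \<mu>)\<^sup>2 \<le> s\<^sup>2 + F\<^sup>2 / s\<^sup>2"
proof -
  define \<nu> where "\<nu> = lse n K (shift n \<mu> \<xi>)"
  define t where "t = edist n \<nu> \<mu>"
  have B: "\<nu> \<in> K" "t\<^sup>2 \<le> ip n \<xi> (\<lambda>i. \<nu> i - \<mu> i)"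
    using lse_basic[OF ne sub cl cv mK, of \<xi>] by (auto simp: \<nu>_def t_def)
  have t0: "0 \<le> t" by (simp add: t_def)
  show ?thesis
  proof (cases "t \<le> s")
    case True
    then have "t\<^sup>2 \<le> s\<^sup>2" using t0 by (intro power_mono) auto
    moreover have "0 \<le> F\<^sup>2 / s\<^sup>2" by simp
    ultimately have "t\<^sup>2 \<le> s\<^sup>2 + F\<^sup>2 / s\<^sup>2" by linarith
    then show ?thesis by (simp add: \<nu>_def[symmetric] t_def[symmetric])
  next
    case False
    then have tp: "t > 0" "s < t" using s0 by auto
    define a where "a = s / t"
    have a01: "0 \<le> a" "a \<le> 1" using tp s0 by (auto simp: a_def)
    define v where "v = (\<lambda>i. (1 - a) * \<mu> i + a * \<nu> i)"
    have vK: "v \<in> K" using cv mK B(1) a01 unfolding convex_n_def v_def by blast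
    have "edist n v \<mu> = \<bar>a\<bar> * t" unfolding v_def t_def by (rule edist_comb)
    also have "\<dots> = s" using tp s0 by (simp add: a_def)
    finally have vd: "edist n v \<mu> = s" .
    have "ip n \<xi> (\<lambda>i. v i - \<mu> i) = a * ip n \<xi> (\<lambda>i. \<nu> i - \<mu> i)" unfolding v_def by (rule ip_diff_scale)
    also have "\<dots> \<ge> a * t\<^sup>2" using B(2) a01 by (intro mult_left_mono) auto
    finally have "a * t\<^sup>2 \<le> F" using chainF[OF vK] vd by simp
    moreover have "a * t\<^sup>2 = s * t" using tp by (simp add: a_def power2_eq_square)
    ultimately have "s * t \<le> F" by simp
    then have "t \<le> F / s" using s0 by (simp add: field_simps)
    then have "t\<^sup>2 \<le> (F / s)\<^sup>2" using t0 by (intro power_mono) auto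
    then have "t\<^sup>2 \<le> F\<^sup>2 / s\<^sup>2" by (simp add: power_divide)
    moreover have "0 \<le> s\<^sup>2" by simp
    ultimately have "t\<^sup>2 \<le> s\<^sup>2 + F\<^sup>2 / s\<^sup>2" by linarith
    then show ?thesis by (simp add: \<nu>_def[symmetric] t_def[symmetric])
  qed
qed

lemma card_ln_bound:
  fixes mm :: "nat \<Rightarrow> nat" and r :: "nat \<Rightarrow> real"
  assumes cw: "cw \<le> (\<Prod>k<Suc i. mm k)"
    and lnb: "\<And>k. k < Suc i \<Longrightarrow> ln (real (mm k)) < (r k)\<^sup>2 / \<sigma>\<^sup>2"
    and rs: "(\<Sum>k<Suc i. (r k)\<^sup>2) \<le> 2 * s\<^sup>2" and s0: "\<sigma> > 0"
  shows "ln (4 * (real cw + 1)) \<le> 3 + 2 * s\<^sup>2 / \<sigma>\<^sup>2"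
proof -
  define P where "P = (\<Prod>k<Suc i. real (max 1 (mm k)))"
  have Ppos: "P \<ge> 1" unfolding P_def by (intro prod_ge_1) auto
  have "real cw \<le> (\<Prod>k<Suc i. real (mm k))" using cw by (metis of_nat_le_iff of_nat_prod)
  also have "\<dots> \<le> P" unfolding P_def by (intro prod_mono) auto
  finally have "4 * (real cw + 1) \<le> 8 * P" using Ppos by simp
  then have "ln (4 * (real cw + 1)) \<le> ln (8 * P)" using Ppos by (subst ln_le_cancel_iff) auto
  also have "\<dots> = ln 8 + ln P" using Ppos by (simp add: ln_mult)
  also have "ln P = (\<Sum>k<Suc i. ln (real (max 1 (mm k))))" unfolding P_def by (subst ln_prod) auto
  also have "\<dots> \<le> (\<Sum>k<Suc i. (r k)\<^sup>2 / \<sigma>\<^sup>2)"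
  proof (intro sum_mono)
    fix k assume "k \<in> {..<Suc i}"
    then have "ln (real (mm k)) < (r k)\<^sup>2 / \<sigma>\<^sup>2" using lnb by simp
    moreover have "0 \<le> (r k)\<^sup>2 / \<sigma>\<^sup>2" by simp
    ultimately show "ln (real (max 1 (mm k))) \<le> (r k)\<^sup>2 / \<sigma>\<^sup>2"
      by (cases "mm k \<le> 1") (auto simp: max_def)
  qed
  also have "\<dots> = (\<Sum>k<Suc i. (r k)\<^sup>2) / \<sigma>\<^sup>2" by (rule sum_divide_distrib[symmetric])
  also have "\<dots> \<le> 2 * s\<^sup>2 / \<sigma>\<^sup>2" using rs s0 by (intro divide_right_mono) auto
  finally show ?thesis using ln8_le3 by linarith
qed

lemma chain_risk:
  assumes n1: "n \<ge> 1" and ne: "K \<noteq> {}" and sub: "K \<subseteq> Rn n" and cl: "closed_n n K" and cv: "convex_n K"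
    and mK: "\<mu> \<in> K" and s0: "\<sigma> > 0" and c2: "c \<ge> 2" and sp: "s > 0"
    and lpL: "\<And>i. i < L \<Longrightarrow> \<exists>m. local_packing n c K (s / c ^ i) = enat m \<and> ln (real m) < (s / c ^ i)\<^sup>2 / \<sigma>\<^sup>2"
  shows "(\<integral>\<^sup>+\<xi>. ennreal ((edist n (lse n K (shift n \<mu> \<xi>)) \<mu>)\<^sup>2) \<partial>gauss n \<sigma>)
     \<le> ennreal (65 * s\<^sup>2 + 112 * \<sigma>\<^sup>2 + 16 * (s / c ^ L)\<^sup>2 * real n * \<sigma>\<^sup>2 / s\<^sup>2)"
proof -
  define r where "r = (\<lambda>i::nat. s / c ^ i)"
  have rpos: "\<And>i. r i > 0" using c2 sp by (simp add: r_def)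
  have rSuc: "\<And>i. r (Suc i) = r i / c" by (simp add: r_def field_simps)
  have r0: "r 0 = s" by (simp add: r_def)
  obtain mm where mm: "\<And>i. i < L \<Longrightarrow> local_packing n c K (r i) = enat (mm i) \<and> ln (real (mm i)) < (r i)\<^sup>2 / \<sigma>\<^sup>2"
    using lpL unfolding r_def by metis
  have "\<forall>i \<theta>. \<exists>P. i < L \<and> \<theta> \<in> K \<longrightarrow> finite P \<and> P \<subseteq> eball n \<theta> (r i) \<inter> K \<and> card P \<le> mm i \<and>
           (\<forall>v\<in>eball n \<theta> (r i) \<inter> K. \<exists>q\<in>P. edist n v q \<le> r i / c)"
  proof (intro allI)
    fix i \<theta>
    show "\<exists>P. i < L \<and> \<theta> \<in> K \<longrightarrow> finite P \<and> P \<subseteq> eball n \<theta> (r i) \<inter> K \<and> card P \<le> mm i \<and>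
           (\<forall>v\<in>eball n \<theta> (r i) \<inter> K. \<exists>q\<in>P. edist n v q \<le> r i / c)"
    proof (cases "i < L \<and> \<theta> \<in> K")
      case True
      have "c > 0" using c2 by simp
      then show ?thesis using cover[OF _ rpos[of i] conjunct1[OF mm[of i]], of \<theta>] True by blast
    qed blast
  qed
  then obtain N where N: "\<And>i \<theta>. i < L \<Longrightarrow> \<theta> \<in> K \<Longrightarrow> finite (N i \<theta>) \<and> N i \<theta> \<subseteq> eball n \<theta> (r i) \<inter> K \<and> card (N i \<theta>) \<le> mm i \<and>
           (\<forall>v\<in>eball n \<theta> (r i) \<inter> K. \<exists>q\<in>N i \<theta>. edist n v q \<le> r i / c)"
    by metis
  interpret netting n K L r N mm \<mu>
    by unfold_locales (use N mK sub rSuc in auto)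
  have "\<forall>i. \<exists>G. i < L \<longrightarrow> goodf n \<sigma> G (\<sigma>\<^sup>2 * (r i)\<^sup>2 * (4 * ln (4 * (real (card (links N \<mu> i)) + 1)) + 2)) \<and>
          (\<forall>\<xi>. (Zf n (links N \<mu> i) \<xi>)\<^sup>2 \<le> G \<xi>)"
  proof
    fix i
    show "\<exists>G. i < L \<longrightarrow> goodf n \<sigma> G (\<sigma>\<^sup>2 * (r i)\<^sup>2 * (4 * ln (4 * (real (card (links N \<mu> i)) + 1)) + 2)) \<and>
          (\<forall>\<xi>. (Zf n (links N \<mu> i) \<xi>)\<^sup>2 \<le> G \<xi>)"
    proof (cases "i < L")
      case True
      then show ?thesis using Z_good[OF _ rpos[of i] s0, of "links N \<mu> i" n] links_props[OF True] by blast
    qed blast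
  qed
  then obtain GZ where GZ: "\<And>i. i < L \<Longrightarrow> goodf n \<sigma> (GZ i) (\<sigma>\<^sup>2 * (r i)\<^sup>2 * (4 * ln (4 * (real (card (links N \<mu> i)) + 1)) + 2))"
    and GZpw: "\<And>i \<xi>. i < L \<Longrightarrow> (Zf n (links N \<mu> i) \<xi>)\<^sup>2 \<le> GZ i \<xi>"
    by metis
  define BZ where "BZ = (\<lambda>i. \<sigma>\<^sup>2 * (r i)\<^sup>2 * (4 * ln (4 * (real (card (links N \<mu> i)) + 1)) + 2))"
  have BZb: "BZ i \<le> r i * (r i * (14 * \<sigma>\<^sup>2 + 8 * s\<^sup>2))" if iL: "i < L" for i
  proof -
    have "ln (4 * (real (card (links N \<mu> i)) + 1)) \<le> 3 + 2 * s\<^sup>2 / \<sigma>\<^sup>2"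
    proof (rule card_ln_bound[where mm = mm and r = r])
      show "card (links N \<mu> i) \<le> (\<Prod>k<Suc i. mm k)" using links_props[OF iL] by simp
      show "ln (real (mm k)) < (r k)\<^sup>2 / \<sigma>\<^sup>2" if "k < Suc i" for k using mm[of k] that iL by simp
      show "(\<Sum>k<Suc i. (r k)\<^sup>2) \<le> 2 * s\<^sup>2" unfolding r_def by (rule geom_r2[OF c2 sp])
    qed (rule s0)
    then have "4 * ln (4 * (real (card (links N \<mu> i)) + 1)) + 2 \<le> 14 + 8 * s\<^sup>2 / \<sigma>\<^sup>2" by linarith
    then have "BZ i \<le> \<sigma>\<^sup>2 * (r i)\<^sup>2 * (14 + 8 * s\<^sup>2 / \<sigma>\<^sup>2)" unfolding BZ_def
      by (intro mult_left_mono) auto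
    also have "\<dots> = r i * (r i * (14 * \<sigma>\<^sup>2 + 8 * s\<^sup>2))" using s0 by (simp add: field_simps power2_eq_square)
    finally show ?thesis .
  qed
  have sumB: "(4 / s) * (\<Sum>i<L. (1 / r i) * BZ i) \<le> 112 * \<sigma>\<^sup>2 + 64 * s\<^sup>2"
  proof -
    have "(\<Sum>i<L. (1 / r i) * BZ i) \<le> (\<Sum>i<L. r i * (14 * \<sigma>\<^sup>2 + 8 * s\<^sup>2))"
    proof (intro sum_mono)
      fix i assume "i \<in> {..<L}"
      then have "BZ i \<le> r i * (r i * (14 * \<sigma>\<^sup>2 + 8 * s\<^sup>2))" using BZb by simp
      then have "(1 / r i) * BZ i \<le> (1 / r i) * (r i * (r i * (14 * \<sigma>\<^sup>2 + 8 * s\<^sup>2)))"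
        using rpos[of i] by (intro mult_left_mono) auto
      then show "(1 / r i) * BZ i \<le> r i * (14 * \<sigma>\<^sup>2 + 8 * s\<^sup>2)" using rpos[of i] by simp
    qed
    also have "\<dots> = (\<Sum>i<L. r i) * (14 * \<sigma>\<^sup>2 + 8 * s\<^sup>2)" by (simp add: sum_distrib_right)
    also have "\<dots> \<le> (2 * s) * (14 * \<sigma>\<^sup>2 + 8 * s\<^sup>2)"
      unfolding r_def by (intro mult_right_mono geom_r[OF c2 sp]) auto
    finally have "(4 / s) * (\<Sum>i<L. (1 / r i) * BZ i) \<le> (4 / s) * ((2 * s) * (14 * \<sigma>\<^sup>2 + 8 * s\<^sup>2))"
      using sp by (intro mult_left_mono) auto
    also have "\<dots> = 112 * \<sigma>\<^sup>2 + 64 * s\<^sup>2" using sp by (simp add: field_simps power2_eq_square)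
    finally show ?thesis .
  qed
  define Gt where "Gt = (\<lambda>\<xi>. s\<^sup>2 + (4 / s) * (\<Sum>i<L. (1 / r i) * GZ i \<xi>) + (2 * (r L)\<^sup>2 / s\<^sup>2) * Gxi n \<sigma> \<xi>)"
  have gGt: "goodf n \<sigma> Gt (s\<^sup>2 + (4 / s) * (\<Sum>i<L. (1 / r i) * BZ i) + (2 * (r L)\<^sup>2 / s\<^sup>2) * (8 * real n * \<sigma>\<^sup>2))"
    unfolding Gt_def BZ_def
    by (intro good_add good_const[OF s0] good_scale good_sum[OF s0] GZ Gxi_good[OF s0])
       (use sp rpos in \<open>auto intro: less_imp_le\<close>)
  have pw: "(edist n (lse n K (shift n \<mu> \<xi>)) \<mu>)\<^sup>2 \<le> Gt \<xi>" for \<xi>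
  proof -
    define Z where "Z = (\<lambda>i. Zf n (links N \<mu> i) \<xi>)"
    define F where "F = (\<Sum>i<L. Z i) + enorm n \<xi> * r L"
    have chainF: "ip n \<xi> (\<lambda>i. v i - \<mu> i) \<le> F" if vK: "v \<in> K" and vd: "edist n v \<mu> \<le> s" for v
    proof -
      obtain p where "p \<in> lvl N \<mu> L" and vp: "edist n v p \<le> r L"
        and ch: "ip n \<xi> (\<lambda>i. v i - \<mu> i) \<le> (\<Sum>k<L. Zf n (links N \<mu> k) \<xi>) + ip n \<xi> (\<lambda>i. v i - p i)"
        using chain[where v=v and j=L and \<xi>=\<xi>] vK vd r0 by auto
      have "ip n \<xi> (\<lambda>i. v i - p i) \<le> enorm n \<xi> * enorm n (\<lambda>i. v i - p i)" by (rule ip_cs)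
      also have "\<dots> \<le> enorm n \<xi> * r L" using vp by (intro mult_left_mono) (auto simp: edist_def)
      finally show ?thesis using ch by (simp add: F_def Z_def)
    qed
    have b1: "(edist n (lse n K (shift n \<mu> \<xi>)) \<mu>)\<^sup>2 \<le> s\<^sup>2 + F\<^sup>2 / s\<^sup>2"
      by (rule basic_pw[OF ne sub cl cv mK sp chainF])
    have "F\<^sup>2 \<le> 2 * (\<Sum>i<L. Z i)\<^sup>2 + 2 * (enorm n \<xi> * r L)\<^sup>2"
    proof -
      have "2 * (\<Sum>i<L. Z i)\<^sup>2 + 2 * (enorm n \<xi> * r L)\<^sup>2 - F\<^sup>2 = ((\<Sum>i<L. Z i) - enorm n \<xi> * r L)\<^sup>2"
        by (simp add: F_def power2_eq_square algebra_simps)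
      then show ?thesis using zero_le_power2[of "(\<Sum>i<L. Z i) - enorm n \<xi> * r L"] by linarith
    qed
    also have "(\<Sum>i<L. Z i)\<^sup>2 \<le> (2 * s) * (\<Sum>i<L. (Z i)\<^sup>2 / r i)"
    proof -
      have "(\<Sum>i<L. Z i)\<^sup>2 \<le> (\<Sum>i<L. r i) * (\<Sum>i<L. (Z i)\<^sup>2 / r i)"
        using rpos by (intro cs_weighted) auto
      also have "\<dots> \<le> (2 * s) * (\<Sum>i<L. (Z i)\<^sup>2 / r i)"
      proof (rule mult_right_mono)
        show "(\<Sum>i<L. r i) \<le> 2 * s" unfolding r_def by (rule geom_r[OF c2 sp])
        show "0 \<le> (\<Sum>i<L. (Z i)\<^sup>2 / r i)" using rpos by (intro sum_nonneg divide_nonneg_nonneg) (auto intro: less_imp_le)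
      qed
      finally show ?thesis .
    qed
    also have "(\<Sum>i<L. (Z i)\<^sup>2 / r i) \<le> (\<Sum>i<L. (1 / r i) * GZ i \<xi>)"
    proof (intro sum_mono)
      fix i assume "i \<in> {..<L}"
      then have "(Z i)\<^sup>2 \<le> GZ i \<xi>" using GZpw by (simp add: Z_def)
      then have "(Z i)\<^sup>2 / r i \<le> GZ i \<xi> / r i" using rpos[of i] by (intro divide_right_mono) auto
      then show "(Z i)\<^sup>2 / r i \<le> (1 / r i) * GZ i \<xi>" by simp
    qed
    also have "(enorm n \<xi> * r L)\<^sup>2 \<le> Gxi n \<sigma> \<xi> * (r L)\<^sup>2"
      using Gxi_pw[OF s0, where n=n and \<xi>=\<xi>] by (simp add: power_mult_distrib mult_right_mono)
    finally have "F\<^sup>2 \<le> 2 * ((2 * s) * (\<Sum>i<L. (1 / r i) * GZ i \<xi>)) + 2 * (Gxi n \<sigma> \<xi> * (r L)\<^sup>2)"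
      using sp by (simp add: mult_left_mono)
    then have "F\<^sup>2 / s\<^sup>2 \<le> (2 * ((2 * s) * (\<Sum>i<L. (1 / r i) * GZ i \<xi>)) + 2 * (Gxi n \<sigma> \<xi> * (r L)\<^sup>2)) / s\<^sup>2"
      using sp by (intro divide_right_mono) auto
    also have "\<dots> = (4 / s) * (\<Sum>i<L. (1 / r i) * GZ i \<xi>) + (2 * (r L)\<^sup>2 / s\<^sup>2) * Gxi n \<sigma> \<xi>"
      using sp by (simp add: field_simps power2_eq_square)
    finally show ?thesis using b1 unfolding Gt_def by linarith
  qed
  have "(\<integral>\<^sup>+\<xi>. ennreal ((edist n (lse n K (shift n \<mu> \<xi>)) \<mu>)\<^sup>2) \<partial>gauss n \<sigma>)
      \<le> ennreal (s\<^sup>2 + (4 / s) * (\<Sum>i<L. (1 / r i) * BZ i) + (2 * (r L)\<^sup>2 / s\<^sup>2) * (8 * real n * \<sigma>\<^sup>2))"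
    by (rule good_bound[OF gGt pw])
  also have "\<dots> \<le> ennreal (65 * s\<^sup>2 + 112 * \<sigma>\<^sup>2 + 16 * (s / c ^ L)\<^sup>2 * real n * \<sigma>\<^sup>2 / s\<^sup>2)"
  proof (rule ennreal_leI)
    have "(2 * (r L)\<^sup>2 / s\<^sup>2) * (8 * real n * \<sigma>\<^sup>2) = 16 * (s / c ^ L)\<^sup>2 * real n * \<sigma>\<^sup>2 / s\<^sup>2"
      by (simp add: r_def)
    then show "s\<^sup>2 + (4 / s) * (\<Sum>i<L. (1 / r i) * BZ i) + (2 * (r L)\<^sup>2 / s\<^sup>2) * (8 * real n * \<sigma>\<^sup>2)
        \<le> 65 * s\<^sup>2 + 112 * \<sigma>\<^sup>2 + 16 * (s / c ^ L)\<^sup>2 * real n * \<sigma>\<^sup>2 / s\<^sup>2"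
      using sumB by linarith
  qed
  finally show ?thesis .
qed



lemma t_le_norm:
  assumes ne: "K \<noteq> {}" and sub: "K \<subseteq> Rn n" and cl: "closed_n n K" and cv: "convex_n K" and mK: "\<mu> \<in> K"
  shows "(edist n (lse n K (shift n \<mu> \<xi>)) \<mu>)\<^sup>2 \<le> enorm n \<xi> * edist n (lse n K (shift n \<mu> \<xi>)) \<mu>"
proof -
  define \<nu> where "\<nu> = lse n K (shift n \<mu> \<xi>)"
  have B: "(edist n \<nu> \<mu>)\<^sup>2 \<le> ip n \<xi> (\<lambda>i. \<nu> i - \<mu> i)"
    using lse_basic[OF ne sub cl cv mK, of \<xi>] by (simp add: \<nu>_def)
  also have "\<dots> \<le> enorm n \<xi> * enorm n (\<lambda>i. \<nu> i - \<mu> i)" by (rule ip_cs)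
  finally show ?thesis by (simp add: \<nu>_def edist_def)
qed

lemma trivial_risk:
  assumes ne: "K \<noteq> {}" and sub: "K \<subseteq> Rn n" and cl: "closed_n n K" and cv: "convex_n K" and mK: "\<mu> \<in> K"
    and s0: "\<sigma> > 0"
  shows "(\<integral>\<^sup>+\<xi>. ennreal ((edist n (lse n K (shift n \<mu> \<xi>)) \<mu>)\<^sup>2) \<partial>gauss n \<sigma>) \<le> ennreal (8 * real n * \<sigma>\<^sup>2)"
proof (rule good_bound[OF Gxi_good[OF s0]])
  fix \<xi>
  define t where "t = edist n (lse n K (shift n \<mu> \<xi>)) \<mu>"
  have a: "t\<^sup>2 \<le> enorm n \<xi> * t" unfolding t_def by (rule t_le_norm[OF ne sub cl cv mK])
  have "t \<le> enorm n \<xi>"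
  proof (cases "t = 0")
    case False
    then have "t > 0" by (simp add: t_def less_le)
    then show ?thesis using a by (simp add: power2_eq_square)
  qed simp
  then have "t\<^sup>2 \<le> (enorm n \<xi>)\<^sup>2" by (intro power_mono) (auto simp: t_def)
  also have "\<dots> \<le> Gxi n \<sigma> \<xi>" by (rule Gxi_pw[OF s0])
  finally show "t\<^sup>2 \<le> Gxi n \<sigma> \<xi>" .
qed

lemma small_risk:
  assumes n1: "n \<ge> 1" and ne: "K \<noteq> {}" and sub: "K \<subseteq> Rn n" and cl: "closed_n n K" and cv: "convex_n K"
    and mK: "\<mu> \<in> K" and s0: "\<sigma> > 0"
    and c1: "c > 1" and e0: "\<epsilon> > 0" and lp: "local_packing n c K \<epsilon> = enat m" and m1: "m \<le> 1"
  shows "(\<integral>\<^sup>+\<xi>. ennreal ((edist n (lse n K (shift n \<mu> \<xi>)) \<mu>)\<^sup>2) \<partial>gauss n \<sigma>) \<le> ennreal (5 * \<sigma> * sqrt (real n) * \<epsilon>)"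
proof -
  define b where "b = \<sigma> * sqrt (real n)"
  have b0: "b > 0" using s0 n1 by (simp add: b_def)
  have g: "goodf n \<sigma> (\<lambda>\<xi>. (\<epsilon> / (2 * b)) * Gxi n \<sigma> \<xi> + \<epsilon> * b / 2) ((\<epsilon> / (2 * b)) * (8 * real n * \<sigma>\<^sup>2) + \<epsilon> * b / 2)"
    using e0 b0 by (intro good_add good_scale Gxi_good[OF s0] good_const[OF s0]) auto
  have "(\<epsilon> / (2 * b)) * (8 * real n * \<sigma>\<^sup>2) + \<epsilon> * b / 2 = \<epsilon> * (4 * (real n * \<sigma>\<^sup>2) / b) + \<epsilon> * b / 2"
    by (simp add: field_simps)
  also have "real n * \<sigma>\<^sup>2 = b * b" using n1 by (simp add: b_def power2_eq_square)
  also have "\<epsilon> * (4 * (b * b) / b) + \<epsilon> * b / 2 = (9/2) * (\<epsilon> * b)" using b0 by (simp add: field_simps)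
  also have "\<dots> \<le> 5 * (\<epsilon> * b)" using b0 e0 by simp
  also have "5 * (\<epsilon> * b) = 5 * \<sigma> * sqrt (real n) * \<epsilon>" by (simp add: b_def mult_ac)
  finally have bnd: "(\<epsilon> / (2 * b)) * (8 * real n * \<sigma>\<^sup>2) + \<epsilon> * b / 2 \<le> 5 * \<sigma> * sqrt (real n) * \<epsilon>" .
  have pw: "(edist n (lse n K (shift n \<mu> \<xi>)) \<mu>)\<^sup>2 \<le> (\<epsilon> / (2 * b)) * Gxi n \<sigma> \<xi> + \<epsilon> * b / 2" for \<xi>
  proof -
    define t where "t = edist n (lse n K (shift n \<mu> \<xi>)) \<mu>"
    have nK: "lse n K (shift n \<mu> \<xi>) \<in> K" using lse_basic[OF ne sub cl cv mK] by blast
    have "t \<le> \<epsilon> / c" unfolding t_def by (rule diam_small[OF c1 e0 lp m1 cv sub mK nK])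
    also have "\<dots> \<le> \<epsilon>" using c1 e0 by (simp add: divide_le_eq)
    finally have te: "t \<le> \<epsilon>" .
    have "t\<^sup>2 \<le> enorm n \<xi> * t" unfolding t_def by (rule t_le_norm[OF ne sub cl cv mK])
    also have "\<dots> \<le> enorm n \<xi> * \<epsilon>" using te by (intro mult_left_mono) auto
    also have "enorm n \<xi> \<le> ((enorm n \<xi>)\<^sup>2 / b + b) / 2"
    proof -
      have "0 \<le> (enorm n \<xi> - b)\<^sup>2" by simp
      then have "2 * b * enorm n \<xi> \<le> (enorm n \<xi>)\<^sup>2 + b * b" by (simp add: power2_eq_square algebra_simps)
      then show ?thesis using b0 by (simp add: field_simps power2_eq_square)
    qed
    then have "enorm n \<xi> * \<epsilon> \<le> ((enorm n \<xi>)\<^sup>2 / b + b) / 2 * \<epsilon>" using e0 by (intro mult_right_mono) auto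
    also have "\<dots> \<le> (Gxi n \<sigma> \<xi> / b + b) / 2 * \<epsilon>"
      using Gxi_pw[OF s0, where n=n and \<xi>=\<xi>] b0 e0 by (intro mult_right_mono divide_right_mono add_right_mono) auto
    also have "\<dots> = (\<epsilon> / (2 * b)) * Gxi n \<sigma> \<xi> + \<epsilon> * b / 2" using b0 by (simp add: field_simps)
    finally show ?thesis by (simp add: t_def)
  qed
  have "(\<integral>\<^sup>+\<xi>. ennreal ((edist n (lse n K (shift n \<mu> \<xi>)) \<mu>)\<^sup>2) \<partial>gauss n \<sigma>)
     \<le> ennreal ((\<epsilon> / (2 * b)) * (8 * real n * \<sigma>\<^sup>2) + \<epsilon> * b / 2)" by (rule good_bound[OF g pw])
  also have "\<dots> \<le> ennreal (5 * \<sigma> * sqrt (real n) * \<epsilon>)" using bnd by (rule ennreal_leI)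
  finally show ?thesis .
qed

lemma ennreal_le_limit:
  assumes d0: "\<delta> > 0" and k0: "k \<ge> 0"
    and H: "\<And>x. e < x \<Longrightarrow> x \<le> e + \<delta> \<Longrightarrow> X \<le> ennreal (k * x)"
  shows "X \<le> ennreal (k * e)"
proof (rule LIMSEQ_le_const)
  have h: "(\<lambda>j. 1 / (real j + 1)) \<longlonglongrightarrow> 0" using LIMSEQ_inverse_real_of_nat
    by (simp add: inverse_eq_divide add.commute)
  have "(\<lambda>j. k * (e + \<delta> * (1 / (real j + 1)))) \<longlonglongrightarrow> k * (e + \<delta> * 0)"
    by (intro tendsto_intros h)
  then show "(\<lambda>j. ennreal (k * (e + \<delta> * (1 / (real j + 1))))) \<longlonglongrightarrow> ennreal (k * e)"
    using tendsto_ennrealI by fastforce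
  show "\<exists>N. \<forall>j\<ge>N. X \<le> ennreal (k * (e + \<delta> * (1 / (real j + 1))))"
  proof (intro exI allI impI)
    fix j :: nat
    have "\<delta> * (1 / (real j + 1)) > 0" using d0 by simp
    moreover have "\<delta> * (1 / (real j + 1)) \<le> \<delta>" using d0 by (simp add: divide_le_eq)
    ultimately show "X \<le> ennreal (k * (e + \<delta> * (1 / (real j + 1))))" by (intro H) auto
  qed
qed



lemma ln2_half: "1/2 \<le> ln (2::real)"
proof -
  have "ln (exp (1/2)) \<le> ln (2::real)" using exp_half_le2 by (subst ln_le_cancel_iff) auto
  then show ?thesis by simp
qed

lemma mu_bound:
  assumes n1: "n \<ge> 1" and ne: "K \<noteq> {}" and sub: "K \<subseteq> Rn n" and cl: "closed_n n K" and cv: "convex_n K"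
    and mK: "\<mu> \<in> K" and s0: "\<sigma> > 0" and c2: "c \<ge> 2"
  shows "(\<integral>\<^sup>+\<xi>. ennreal ((edist n (lse n K (shift n \<mu> \<xi>)) \<mu>)\<^sup>2) \<partial>gauss n \<sigma>)
     \<le> ennreal (305 * (\<sigma> * sqrt (real n)) * eps_star n c K \<sigma>)"
proof -
  define e where "e = eps_star n c K \<sigma>"
  define b where "b = \<sigma> * sqrt (real n)"
  define X where "X = (\<integral>\<^sup>+\<xi>. ennreal ((edist n (lse n K (shift n \<mu> \<xi>)) \<mu>)\<^sup>2) \<partial>gauss n \<sigma>)"
  have c0: "c > 0" using c2 by simp
  have e0: "e \<ge> 0" unfolding e_def by (rule eps_star_nonneg[OF n1 c0 s0])
  have b0: "b > 0" using s0 n1 by (simp add: b_def)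
  have sqn: "sqrt (real n) \<ge> 1" using n1 by simp
  have bs: "\<sigma> \<le> b" using s0 sqn by (simp add: b_def)
  define \<delta> where "\<delta> = (if e < \<sigma> / 2 then \<sigma> / 2 - e else 1)"
  have d0: "\<delta> > 0" by (simp add: \<delta>_def)
  have H: "X \<le> ennreal ((305 * b) * x)" if ex: "e < x" and xd: "x \<le> e + \<delta>" for x
  proof -
    have x0: "x > 0" using ex e0 by linarith
    obtain m where lpm: "local_packing n c K x = enat m" and lnm: "ln (real m) < x\<^sup>2 / \<sigma>\<^sup>2"
      using above_eps_star[OF n1 c0 s0, where \<epsilon>=x and K=K] ex by (auto simp: e_def)
    show ?thesis
    proof (cases "e < \<sigma> / 2")
      case True
      then have xs: "x \<le> \<sigma> / 2" using xd by (simp add: \<delta>_def)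
      have "x\<^sup>2 \<le> (\<sigma> / 2)\<^sup>2" using xs x0 by (intro power_mono) auto
      then have "x\<^sup>2 / \<sigma>\<^sup>2 \<le> 1/4" using s0 by (simp add: power_divide divide_le_eq)
      then have "ln (real m) < 1/2" using lnm by linarith
      have m1: "m \<le> 1"
      proof (rule ccontr)
        assume "\<not> m \<le> 1"
        then have "real m \<ge> 2" by simp
        then have "ln 2 \<le> ln (real m)" by (subst ln_le_cancel_iff) auto
        then show False using ln2_half \<open>ln (real m) < 1/2\<close> by linarith
      qed
      have "X \<le> ennreal (5 * \<sigma> * sqrt (real n) * x)" unfolding X_def
        using c2 by (intro small_risk[OF n1 ne sub cl cv mK s0 _ x0 lpm m1]) auto
      also have "\<dots> \<le> ennreal ((305 * b) * x)" using x0 b0 s0 by (intro ennreal_leI) (simp add: b_def)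
      finally show ?thesis .
    next
      case False
      then have se: "\<sigma> \<le> 2 * x" using ex by linarith
      show ?thesis
      proof (cases "b \<le> x")
        case True
        have "X \<le> ennreal (8 * real n * \<sigma>\<^sup>2)" unfolding X_def by (rule trivial_risk[OF ne sub cl cv mK s0])
        also have "8 * real n * \<sigma>\<^sup>2 = 8 * b * b" by (simp add: b_def power2_eq_square)
        also have "8 * b * b \<le> (305 * b) * x" using True b0 by (simp add: mult_left_mono)
        finally show ?thesis by (simp add: ennreal_leI)
      next
        case False
        define s where "s = sqrt (b * x)"
        have s2: "s\<^sup>2 = b * x" using b0 x0 by (simp add: s_def)
        have sp: "s > 0" using b0 x0 by (simp add: s_def)
        have sx: "x < s"
        proof -
          have "x\<^sup>2 < s\<^sup>2" using False x0 s2 by (simp add: power2_eq_square)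
          then show ?thesis using sp by (simp add: power_less_imp_less_base)
        qed
        obtain L0 where L0: "s / x < c ^ L0" using real_arch_pow[of c "s / x"] c2 by auto
        have exL: "\<exists>L. s / c ^ L \<le> x"
        proof
          have "s < c ^ L0 * x" using L0 x0 by (simp add: pos_divide_less_eq)
          moreover have "c ^ L0 > 0" using c2 by simp
          ultimately show "s / c ^ L0 \<le> x" by (simp add: divide_le_eq mult.commute)
        qed
        define L where "L = (LEAST L. s / c ^ L \<le> x)"
        have sL: "s / c ^ L \<le> x" unfolding L_def by (rule LeastI_ex[OF exL])
        have lpL: "\<exists>m. local_packing n c K (s / c ^ i) = enat m \<and> ln (real m) < (s / c ^ i)\<^sup>2 / \<sigma>\<^sup>2" if "i < L" for i
        proof -
          have "\<not> s / c ^ i \<le> x" using not_less_Least[OF that[unfolded L_def]] by simp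
          then have "e < s / c ^ i" using ex by simp
          then show ?thesis using above_eps_star[OF n1 c0 s0, where \<epsilon>="s / c ^ i" and K=K] by (simp add: e_def)
        qed
        have "X \<le> ennreal (65 * s\<^sup>2 + 112 * \<sigma>\<^sup>2 + 16 * (s / c ^ L)\<^sup>2 * real n * \<sigma>\<^sup>2 / s\<^sup>2)"
          unfolding X_def by (rule chain_risk[OF n1 ne sub cl cv mK s0 c2 sp lpL])
        also have "\<dots> \<le> ennreal ((305 * b) * x)"
        proof (rule ennreal_leI)
          have t1: "(s / c ^ L)\<^sup>2 \<le> x\<^sup>2" using sL sp c2 by (intro power_mono) auto
          have "16 * (s / c ^ L)\<^sup>2 * real n * \<sigma>\<^sup>2 / s\<^sup>2 \<le> 16 * x\<^sup>2 * real n * \<sigma>\<^sup>2 / s\<^sup>2"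
            using t1 sp by (intro divide_right_mono mult_right_mono) auto
          also have "\<dots> = 16 * x\<^sup>2 * (real n * \<sigma>\<^sup>2) / (b * x)" using s2 by (simp add: mult.assoc)
          also have "real n * \<sigma>\<^sup>2 = b * b" using n1 by (simp add: b_def power2_eq_square)
          also have "16 * x\<^sup>2 * (b * b) / (b * x) = 16 * (b * x)" using b0 x0 by (simp add: power2_eq_square field_simps)
          finally have t2: "16 * (s / c ^ L)\<^sup>2 * real n * \<sigma>\<^sup>2 / s\<^sup>2 \<le> 16 * (b * x)" .
          have "\<sigma>\<^sup>2 \<le> 2 * (b * x)"
          proof -
            have "\<sigma> * \<sigma> \<le> b * (2 * x)" using bs se s0 by (intro mult_mono) auto
            then show ?thesis by (simp add: power2_eq_square)
          qed
          then show "65 * s\<^sup>2 + 112 * \<sigma>\<^sup>2 + 16 * (s / c ^ L)\<^sup>2 * real n * \<sigma>\<^sup>2 / s\<^sup>2 \<le> (305 * b) * x"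
            using t2 s2 by linarith
        qed
        finally show ?thesis .
      qed
    qed
  qed
  have "X \<le> ennreal ((305 * b) * e)"
    using d0 b0 H by (intro ennreal_le_limit[of \<delta> "305 * b" e X]) auto
  then show ?thesis by (simp add: X_def e_def b_def)
qed

lemma main_bound:
  fixes cstar :: real and n :: nat and K :: "(nat \<Rightarrow> real) set" and \<sigma> :: real
  assumes c2: "2 \<le> cstar"
    and H: "n \<ge> 1 \<and> K \<noteq> {} \<and> K \<subseteq> Rn n \<and> closed_n n K \<and> convex_n K \<and> \<sigma> > 0"
  shows "worst_risk n \<sigma> K \<le> ennreal ((3 * sqrt \<sigma> * (4 * 2 * (1 + log cstar (sqrt (2 * pi * real n))) powr (3/2))
        * sqrt (eps_star n cstar K \<sigma>) * real n powr (1/4))\<^sup>2)"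
proof -
  from H have n1: "n \<ge> 1" and ne: "K \<noteq> {}" and sub: "K \<subseteq> Rn n" and cl: "closed_n n K"
    and cv: "convex_n K" and s0: "\<sigma> > 0" by auto
  define e where "e = eps_star n cstar K \<sigma>"
  have e0: "e \<ge> 0" unfolding e_def using c2 by (intro eps_star_nonneg[OF n1 _ s0]) auto
  define P where "P = (1 + log cstar (sqrt (2 * pi * real n))) powr (3/2)"
  have lg: "0 \<le> log cstar (sqrt (2 * pi * real n))"
  proof -
    have "1 \<le> 2 * pi * real n" using n1 pi_gt3 by (smt (verit) mult_le_cancel_left1 of_nat_1 of_nat_mono)
    then have "1 \<le> sqrt (2 * pi * real n)" by simp
    then show ?thesis using c2 by (subst zero_le_log_cancel_iff) auto
  qed
  have P1: "P \<ge> 1" unfolding P_def using lg by (intro ge_one_powr_ge_zero) auto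
  define Q where "Q = 4 * 2 * P"
  have Q8: "Q \<ge> 8" using P1 by (simp add: Q_def)
  have n4: "(real n powr (1/4))\<^sup>2 = sqrt (real n)"
  proof -
    have "(real n powr (1/4))\<^sup>2 = real n powr (of_nat 2 * (1/4))" using n1 by (subst powr_power) auto
    also have "\<dots> = sqrt (real n)" by (simp add: powr_half_sqrt)
    finally show ?thesis .
  qed
  have rhs: "(3 * sqrt \<sigma> * Q * sqrt e * real n powr (1/4))\<^sup>2 = 9 * Q\<^sup>2 * (\<sigma> * sqrt (real n) * e)"
    using s0 e0 by (simp add: power_mult_distrib n4 mult_ac)
  have "worst_risk n \<sigma> K \<le> ennreal (305 * (\<sigma> * sqrt (real n)) * e)"
    unfolding worst_risk_def e_def
    by (intro SUP_least mu_bound[OF n1 ne sub cl cv _ s0 c2])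
  also have "\<dots> \<le> ennreal ((3 * sqrt \<sigma> * Q * sqrt e * real n powr (1/4))\<^sup>2)"
  proof (rule ennreal_leI)
    have "64 \<le> Q\<^sup>2" using Q8 power_mono[of 8 Q 2] by simp
    moreover have "0 \<le> \<sigma> * sqrt (real n) * e" using s0 e0 by simp
    ultimately have "305 * (\<sigma> * sqrt (real n) * e) \<le> 9 * Q\<^sup>2 * (\<sigma> * sqrt (real n) * e)"
      by (intro mult_right_mono) auto
    moreover have "305 * (\<sigma> * sqrt (real n)) * e = 305 * (\<sigma> * sqrt (real n) * e)" by simp
    ultimately show "305 * (\<sigma> * sqrt (real n)) * e \<le> (3 * sqrt \<sigma> * Q * sqrt e * real n powr (1/4))\<^sup>2"
      unfolding rhs by simp
  qed
  finally show ?thesis by (simp add: Q_def P_def e_def)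
qed

theorem mainTheorem5:
  shows "\<exists>c0>1. \<forall>cstar\<ge>c0. \<exists>C>1. \<exists>A>0. \<forall>(n::nat) (K::(nat \<Rightarrow> real) set) (\<sigma>::real).
    n \<ge> 1 \<and> K \<noteq> {} \<and> K \<subseteq> Rn n \<and> closed_n n K \<and> convex_n K \<and> \<sigma> > 0 \<longrightarrow>
    worst_risk n \<sigma> K \<le> ennreal ((A * sqrt \<sigma>
        * (4 * C * (1 + log cstar (sqrt (2 * pi * real n))) powr (3/2))
        * sqrt (eps_star n cstar K \<sigma>) * real n powr (1/4))\<^sup>2)"
proof -
  have "\<forall>cstar\<ge>2. \<exists>C>1. \<exists>A>0. \<forall>(n::nat) (K::(nat \<Rightarrow> real) set) (\<sigma>::real).
    n \<ge> 1 \<and> K \<noteq> {} \<and> K \<subseteq> Rn n \<and> closed_n n K \<and> convex_n K \<and> \<sigma> > 0 \<longrightarrow>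
    worst_risk n \<sigma> K \<le> ennreal ((A * sqrt \<sigma>
        * (4 * C * (1 + log cstar (sqrt (2 * pi * real n))) powr (3/2))
        * sqrt (eps_star n cstar K \<sigma>) * real n powr (1/4))\<^sup>2)"
  proof (intro allI impI)
    fix cstar :: real assume c2: "2 \<le> cstar"
    have A: "\<forall>(n::nat) (K::(nat \<Rightarrow> real) set) (\<sigma>::real).
      n \<ge> 1 \<and> K \<noteq> {} \<and> K \<subseteq> Rn n \<and> closed_n n K \<and> convex_n K \<and> \<sigma> > 0 \<longrightarrow>
      worst_risk n \<sigma> K \<le> ennreal ((3 * sqrt \<sigma>
        * (4 * 2 * (1 + log cstar (sqrt (2 * pi * real n))) powr (3/2))
        * sqrt (eps_star n cstar K \<sigma>) * real n powr (1/4))\<^sup>2)"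
      using main_bound[OF c2] by blast
    have "(2::real) > 1" "(3::real) > 0" by simp_all
    then show "\<exists>C>1. \<exists>A>0. \<forall>(n::nat) (K::(nat \<Rightarrow> real) set) (\<sigma>::real).
      n \<ge> 1 \<and> K \<noteq> {} \<and> K \<subseteq> Rn n \<and> closed_n n K \<and> convex_n K \<and> \<sigma> > 0 \<longrightarrow>
      worst_risk n \<sigma> K \<le> ennreal ((A * sqrt \<sigma>
        * (4 * C * (1 + log cstar (sqrt (2 * pi * real n))) powr (3/2))
        * sqrt (eps_star n cstar K \<sigma>) * real n powr (1/4))\<^sup>2)"
      using A by blast
  qed
  moreover have "(2::real) > 1" by simp
  ultimately show ?thesis by blast
qed


end
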